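(* Let $G$ be a finite group with $|G|\ge 3$. (1) For every subset $G_0\subset G$, the inclusion $\mathcal B(G_0)\subset\mathcal F(G_0)$ is cofinal and $\mathcal B(G_0)$ is a C-monoid. (2) $\mathsf v_g(\mathcal B(G))=\mathbb N_0$ for all $g\in G$; the embedding $\widehat{\mathcal B(G)}\hookrightarrow\mathcal F(G)$ is a divisor theory, and the map $\Phi:\mathsf q(\mathcal F(G))/\mathsf q(\mathcal B(G))\to G/G'$, $S\,\mathsf q(\mathcal B(G))\mapsto gG'$ for $S\in\mathcal F(G)$ and $g\in\pi(S)$, is a well-defined group isomorphism; here $\mathsf q(\mathcal F(G))/\mathsf q(\mathcal B(G))$ is the class group of the Krull monoid $\widehat{\mathcal B(G)}$. (3) There is a semigroup epimorphism from the class semigroup $\mathcal C(\mathcal B(G),\mathcal F(G))$ onto $G/G'$.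
   Context: Let $G$ be a finite group written multiplicatively with identity $1_G$, and $G'$ its commutator subgroup. For $G_0\subset G$, $\mathcal F(G_0)$ is the free abelian monoid with basis $G_0$ (sequences $S=g_1\boldsymbol{\cdot}\ldots\boldsymbol{\cdot}g_\ell$, operation $\boldsymbol{\cdot}$), $\mathsf v_g(S)$ is the multiplicity of $g$ in $S$, $\pi(S)=\{g_{\tau(1)}\cdots g_{\tau(\ell)}:\tau\text{ a permutation}\}$ ($\pi$ of the empty sequence is $\{1_G\}$), and $\mathcal B(G_0)=\{S\in\mathcal F(G_0):1_G\in\pi(S)\}$. For a monoid $H$, $\mathsf q(H)$ is its quotient group and $\widehat H=\{x\in\mathsf q(H):\exists c\in H\ \forall n\in\mathbb N:\ cx^n\in H\}$ its complete integral closure. A submonoid $H\subset F$ is cofinal if every $\alpha\in F$ divides some element of $H$ in $F$. A homomorphism $\varphi:H\to D$ is a divisor theory if $D$ is free abelian, $\varphi(a)\mid\varphi(b)$ implies $a\mid b$, and every $\alpha\in D$ is the gcd of finitely many elements of $\varphi(H)$. For a submonoid $H$ of a monoid $F$, $y,y'\in F$ are $H$-equivalent if $y^{-1}H\cap F=y'^{-1}H\cap F$; this is a congruence, the set of classes $\mathcal C(H,F)$ is the class semigroup, and $\mathcal C^*(H,F)$ is the subsemigroup of classes of elements of $(F\setminus F^\times)\cup\{1\}$. $H$ is a C-monoid if it is a submonoid of a factorial monoid $F$ with $H\cap F^\times=H^\times$ and $\mathcal C^*(H,F)$ finite. *)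

theory Defs
  imports "HOL-Algebra.Algebra" "HOL-Library.Multiset"
begin

text \<open>F(G0): the free abelian monoid over G0, modelled as finite multisets with support in G0.\<close>
definition seqs :: "'a set \<Rightarrow> 'a multiset set" where
  "seqs G0 = {S. set_mset S \<subseteq> G0}"

text \<open>pi(S): products of S over all orderings (the empty product is the identity).\<close>
definition prods :: "('a, 'b) monoid_scheme \<Rightarrow> 'a multiset \<Rightarrow> 'a set" where
  "prods G S = {foldr (\<otimes>\<^bsub>G\<^esub>) xs \<one>\<^bsub>G\<^esub> | xs. mset xs = S}"

text \<open>B(G0): product-one sequences over G0.\<close>
definition zss :: "('a, 'b) monoid_scheme \<Rightarrow> 'a set \<Rightarrow> 'a multiset set" where
  "zss G G0 = {S \<in> seqs G0. \<one>\<^bsub>G\<^esub> \<in> prods G S}"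

definition msmon :: "'a multiset set \<Rightarrow> 'a multiset monoid" where
  "msmon M = \<lparr>carrier = M, monoid.mult = (+), one = (0::'a multiset)\<rparr>"

definition cofinal :: "'a set \<Rightarrow> ('a, 'b) monoid_scheme \<Rightarrow> bool" where
  "cofinal H F \<longleftrightarrow> (\<forall>\<alpha>\<in>carrier F. \<exists>h\<in>H. \<alpha> divides\<^bsub>F\<^esub> h)"

definition H_equiv :: "'a set \<Rightarrow> ('a, 'b) monoid_scheme \<Rightarrow> 'a \<Rightarrow> 'a \<Rightarrow> bool" where
  "H_equiv H F y y' \<longleftrightarrow>
     {x \<in> carrier F. y \<otimes>\<^bsub>F\<^esub> x \<in> H} = {x \<in> carrier F. y' \<otimes>\<^bsub>F\<^esub> x \<in> H}"

definition H_class :: "'a set \<Rightarrow> ('a, 'b) monoid_scheme \<Rightarrow> 'a \<Rightarrow> 'a set" where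
  "H_class H F y = {y' \<in> carrier F. H_equiv H F y y'}"

text \<open>The class semigroup C(H,F) with the induced operation [y][y'] = [y y'].\<close>
definition class_semigroup :: "'a set \<Rightarrow> ('a, 'b) monoid_scheme \<Rightarrow> 'a set monoid" where
  "class_semigroup H F =
     \<lparr>carrier = H_class H F ` carrier F,
      monoid.mult = (\<lambda>A B. H_class H F ((SOME a. a \<in> A) \<otimes>\<^bsub>F\<^esub> (SOME b. b \<in> B))),
      one = H_class H F \<one>\<^bsub>F\<^esub>\<rparr>"

definition class_star :: "'a set \<Rightarrow> ('a, 'b) monoid_scheme \<Rightarrow> 'a set set" where
  "class_star H F = H_class H F ` ((carrier F - Units F) \<union> {\<one>\<^bsub>F\<^esub>})"

text \<open>C-monoid: H is a submonoid of a factorial monoid F with H \<inter> F^\<times> = H^\<times>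
  and C*(H,F) finite.  (F ranges over monoids on the element type of H.)\<close>
definition C_monoid :: "('a, 'b) monoid_scheme \<Rightarrow> bool" where
  "C_monoid H \<longleftrightarrow> (\<exists>F :: 'a monoid.
     factorial_monoid F \<and> carrier H \<subseteq> carrier F \<and> \<one>\<^bsub>H\<^esub> = \<one>\<^bsub>F\<^esub> \<and>
     (\<forall>a\<in>carrier H. \<forall>b\<in>carrier H. a \<otimes>\<^bsub>H\<^esub> b = a \<otimes>\<^bsub>F\<^esub> b) \<and>
     carrier H \<inter> Units F = Units H \<and>
     finite (class_star (carrier H) F))"

definition free_abelian :: "('a, 'b) monoid_scheme \<Rightarrow> bool" where
  "free_abelian D \<longleftrightarrow> (\<exists>(P :: 'a set) (f :: 'a multiset \<Rightarrow> 'a).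
     bij_betw f {m. set_mset m \<subseteq> P} (carrier D) \<and> f {#} = \<one>\<^bsub>D\<^esub> \<and>
     (\<forall>m n. set_mset m \<subseteq> P \<longrightarrow> set_mset n \<subseteq> P \<longrightarrow> f (m + n) = f m \<otimes>\<^bsub>D\<^esub> f n))"

definition is_gcd_set :: "('a, 'b) monoid_scheme \<Rightarrow> 'a \<Rightarrow> 'a set \<Rightarrow> bool" where
  "is_gcd_set D \<alpha> A \<longleftrightarrow> \<alpha> \<in> carrier D \<and> (\<forall>a\<in>A. \<alpha> divides\<^bsub>D\<^esub> a) \<and>
     (\<forall>\<delta>\<in>carrier D. (\<forall>a\<in>A. \<delta> divides\<^bsub>D\<^esub> a) \<longrightarrow> \<delta> divides\<^bsub>D\<^esub> \<alpha>)"

definition divisor_theory ::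
  "('a, 'c) monoid_scheme \<Rightarrow> ('b, 'd) monoid_scheme \<Rightarrow> ('a \<Rightarrow> 'b) \<Rightarrow> bool" where
  "divisor_theory H D \<phi> \<longleftrightarrow>
     \<phi> \<in> hom H D \<and> \<phi> \<one>\<^bsub>H\<^esub> = \<one>\<^bsub>D\<^esub> \<and> free_abelian D \<and>
     (\<forall>a\<in>carrier H. \<forall>b\<in>carrier H. \<phi> a divides\<^bsub>D\<^esub> \<phi> b \<longrightarrow> a divides\<^bsub>H\<^esub> b) \<and>
     (\<forall>\<alpha>\<in>carrier D. \<exists>A. finite A \<and> A \<subseteq> \<phi> ` carrier H \<and> is_gcd_set D \<alpha> A)"

text \<open>Submonoids of F(G) are embedded into q(F(G)) = the free abelian group on G,
  modelled as integer-valued functions (a multiset S maps to its multiplicity function).\<close>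
definition vec :: "'a multiset \<Rightarrow> ('a \<Rightarrow> int)" where
  "vec S = (\<lambda>g. int (count S g))"

text \<open>q(H) for a submonoid H of q(F(G)): the subgroup generated, i.e. all differences.\<close>
definition qgrp :: "('a \<Rightarrow> int) set \<Rightarrow> ('a \<Rightarrow> int) set" where
  "qgrp M = {(\<lambda>g. x g - y g) | x y. x \<in> M \<and> y \<in> M}"

text \<open>Complete integral closure: x \<in> q(H) with c x^n \<in> H for some c \<in> H and all n \<in> \<nat> = {1,2,...}.\<close>
definition cic :: "('a \<Rightarrow> int) set \<Rightarrow> ('a \<Rightarrow> int) set" where
  "cic M = {x \<in> qgrp M. \<exists>c\<in>M. \<forall>n::nat. n \<ge> 1 \<longrightarrow> (\<lambda>g. c g + int n * x g) \<in> M}"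

definition vmon :: "('a \<Rightarrow> int) set \<Rightarrow> ('a \<Rightarrow> int) monoid" where
  "vmon M = \<lparr>carrier = M, monoid.mult = (\<lambda>a b g. a g + b g), one = (\<lambda>g. 0::int)\<rparr>"

definition Phi :: "('a, 'b) monoid_scheme \<Rightarrow> ('a \<Rightarrow> int) set \<Rightarrow> 'a set" where
  "Phi G C = derived G (carrier G) #>\<^bsub>G\<^esub>
     (SOME g. \<exists>S\<in>seqs (carrier G). C = qgrp (vec ` zss G (carrier G)) #>\<^bsub>vmon (qgrp (vec ` seqs (carrier G)))\<^esub> vec S
                \<and> g \<in> prods G S)"

end

theory Submission
  imports Defs
begin


context group begin

definition lp :: "'a list \<Rightarrow> 'a" where "lp xs = foldr (\<otimes>) xs \<one>"

lemma lp_Nil[simp]: "lp [] = \<one>" by (simp add: lp_def)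
lemma lp_Cons[simp]: "lp (x # xs) = x \<otimes> lp xs" by (simp add: lp_def)

lemma lp_closed[intro, simp]: "set xs \<subseteq> carrier G \<Longrightarrow> lp xs \<in> carrier G"
  by (induction xs) auto

lemma lp_append: "set xs \<subseteq> carrier G \<Longrightarrow> set ys \<subseteq> carrier G \<Longrightarrow> lp (xs @ ys) = lp xs \<otimes> lp ys"
  by (induction xs) (auto simp: m_assoc)

lemma prods_lp: "prods G S = {lp xs | xs. mset xs = S}"
  by (simp add: prods_def lp_def)

lemma prods_ne: "\<exists>p. p \<in> prods G S"
  using ex_mset[of S] by (auto simp: prods_lp)

lemma prods_closed: "S \<in> seqs (carrier G) \<Longrightarrow> p \<in> prods G S \<Longrightarrow> p \<in> carrier G"
  by (auto simp: prods_lp seqs_def)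

lemma prods_add: "S \<in> seqs (carrier G) \<Longrightarrow> T \<in> seqs (carrier G) \<Longrightarrow> p \<in> prods G S \<Longrightarrow> q \<in> prods G T
   \<Longrightarrow> p \<otimes> q \<in> prods G (S + T)"
  apply (clarsimp simp: prods_lp seqs_def)
  subgoal for xs ys by (rule exI[of _ "xs @ ys"]) (auto simp: lp_append)
  done

lemma prods_empty[simp]: "prods G {#} = {\<one>}"
  by (auto simp: prods_lp)

lemma prods_single: "g \<in> carrier G \<Longrightarrow> prods G {#g#} = {g}"
  by (auto simp: prods_lp)

lemma seqs_add[simp]: "S + T \<in> seqs A \<longleftrightarrow> S \<in> seqs A \<and> T \<in> seqs A"
  by (auto simp: seqs_def)

lemma seqs_empty[simp]: "{#} \<in> seqs A" by (simp add: seqs_def)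

lemma seqs_mono: "A \<subseteq> B \<Longrightarrow> S \<in> seqs A \<Longrightarrow> S \<in> seqs B"
  by (auto simp: seqs_def)

lemma one_prods_add: "S \<in> seqs (carrier G) \<Longrightarrow> T \<in> seqs (carrier G) \<Longrightarrow> \<one> \<in> prods G S \<Longrightarrow> \<one> \<in> prods G T
   \<Longrightarrow> \<one> \<in> prods G (S + T)"
  using prods_add[of S T \<one> \<one>] by simp

lemma pow_comm1: "x \<in> carrier G \<Longrightarrow> x \<otimes> x [^] (n::nat) = x [^] n \<otimes> x"
  by (metis nat_pow_Suc nat_pow_Suc2)

lemma lp_replicate: "x \<in> carrier G \<Longrightarrow> lp (replicate n x) = x [^] n"
  by (induction n) (auto simp: pow_comm1)

lemma lp_concat_replicate: "set xs \<subseteq> carrier G \<Longrightarrow> lp (concat (replicate n xs)) = lp xs [^] n"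
proof (induction n)
  case (Suc n)
  have "set (concat (replicate n xs)) \<subseteq> carrier G" using Suc.prems by (induction n) auto
  then show ?case using Suc by (simp add: lp_append pow_comm1)
qed simp

lemma one_prods_repeat: 
  assumes "S \<in> seqs (carrier G)" shows "\<one> \<in> prods G (repeat_mset (order G) S)"
proof -
  obtain xs where xs: "mset xs = S" using ex_mset by blast
  have "mset (concat (replicate n xs)) = repeat_mset n S" for n
    using xs by (induction n) auto
  moreover have "lp (concat (replicate (order G) xs)) = \<one>"
  proof -
    have "set xs \<subseteq> carrier G" using assms xs by (auto simp: seqs_def)
    then show ?thesis by (simp add: lp_concat_replicate pow_order_eq_1)
  qed
  ultimately show ?thesis unfolding prods_lp
    by (intro CollectI exI[of _ "concat (replicate (order G) xs)"]) auto
qed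

lemma one_prods_replicate:
  assumes "g \<in> carrier G" shows "\<one> \<in> prods G (replicate_mset (k * order G) g)"
proof -
  have "lp (replicate (k * order G) g) = \<one>"
    using assms by (simp add: lp_replicate nat_pow_pow[symmetric] mult.commute pow_order_eq_1)
  then show ?thesis unfolding prods_lp by (metis (mono_tags, lifting) mem_Collect_eq mset_replicate)
qed

end


context group begin

abbreviation "DG \<equiv> derived G (carrier G)"

lemma DG_normal: "DG \<lhd> G" by (rule derived_self_is_normal)
lemma DG_subgroup: "subgroup DG G" using DG_normal normal_imp_subgroup by blast
lemma DG_sub: "DG \<subseteq> carrier G" using DG_subgroup subgroup.subset by blast

lemma rho_hom: "(\<lambda>a. DG #> a) \<in> hom G (G Mod DG)"
  by (rule normal.r_coset_hom_Mod[OF DG_normal])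

lemma rho_lp:
  assumes "set xs \<subseteq> carrier G"
  shows "DG #> lp xs = foldr (\<otimes>\<^bsub>G Mod DG\<^esub>) (map (\<lambda>a. DG #> a) xs) \<one>\<^bsub>G Mod DG\<^esub>"
  using assms
proof (induction xs)
  case Nil
  have "group_hom G (G Mod DG) (\<lambda>a. DG #> a)"
    using rho_hom derived_quot_is_group by (simp add: group_hom_def group_hom_axioms_def group_axioms)
  then show ?case using group_hom.hom_one by fastforce
next
  case (Cons a xs)
  then show ?case using rho_hom lp_closed by (simp add: hom_mult)
qed

lemma rho_perm:
  assumes "mset xs = mset ys" "set xs \<subseteq> carrier G"
  shows "DG #> lp xs = DG #> lp ys"
proof -
  interpret Q: comm_group "G Mod DG" by (rule derived_quot_is_comm_group)
  have ys: "set ys \<subseteq> carrier G" using assms by (metis set_mset_mset)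
  have "set (map (\<lambda>a. DG #> a) xs) \<subseteq> carrier (G Mod DG)"
    using assms(2) rho_hom by (auto simp: hom_def)
  moreover have "mset (map (\<lambda>a. DG #> a) xs) = mset (map (\<lambda>a. DG #> a) ys)"
    using assms(1) by (simp add: mset_map)
  ultimately show ?thesis
    using rho_lp[OF assms(2)] rho_lp[OF ys] Q.multlist_perm_cong by metis
qed

lemma rho_prods:
  assumes "S \<in> seqs (carrier G)" "p \<in> prods G S" "q \<in> prods G S"
  shows "DG #> p = DG #> q"
proof -
  have "\<exists>xs. p = lp xs \<and> mset xs = S" using assms(2) by (simp add: prods_lp)
  then obtain xs where xs: "p = lp xs" "mset xs = S" by blast
  have "\<exists>ys. q = lp ys \<and> mset ys = S" using assms(3) by (simp add: prods_lp)
  then obtain ys where ys: "q = lp ys" "mset ys = S" by blast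
  have "set xs = set_mset S" using xs(2) by auto
  then have "set xs \<subseteq> carrier G" using assms(1) unfolding seqs_def by simp
  moreover have "mset xs = mset ys" using xs(2) ys(2) by simp
  ultimately have "DG #> lp xs = DG #> lp ys" using rho_perm by blast
  then show ?thesis using xs(1) ys(1) by simp
qed

lemma rho_one_iff:
  assumes "p \<in> carrier G" shows "DG #> p = DG \<longleftrightarrow> p \<in> DG"
proof
  assume "DG #> p = DG"
  moreover have "p \<in> DG #> p" by (rule rcos_self[OF assms DG_subgroup])
  ultimately show "p \<in> DG" by simp
next
  assume "p \<in> DG"
  then show "DG #> p = DG" by (rule subgroup.rcos_const[OF DG_subgroup is_group])
qed

lemma rho_one: "DG #> \<one> = DG"
  by (rule coset_mult_one[OF DG_sub])

lemma rho_mult_right: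
  assumes "a \<in> carrier G" "b \<in> carrier G" "c \<in> carrier G" "DG #> a = DG #> b"
  shows "DG #> (a \<otimes> c) = DG #> (b \<otimes> c)"
proof -
  have "DG #> (a \<otimes> c) = (DG #> a) #> c" using coset_mult_assoc[OF DG_sub assms(1,3)] by simp
  also have "\<dots> = (DG #> b) #> c" using assms(4) by simp
  also have "\<dots> = DG #> (b \<otimes> c)" using coset_mult_assoc[OF DG_sub assms(2,3)] by simp
  finally show ?thesis .
qed

lemma rho_cancel_right:
  assumes "a \<in> carrier G" "b \<in> carrier G" "c \<in> carrier G" "DG #> (a \<otimes> c) = DG #> (b \<otimes> c)"
  shows "DG #> a = DG #> b"
proof -
  have "DG #> (a \<otimes> c \<otimes> inv c) = DG #> (b \<otimes> c \<otimes> inv c)"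
    by (rule rho_mult_right) (use assms in auto)
  then show ?thesis using assms by (simp add: m_assoc)
qed

lemma in_prods: "mset xs = S \<Longrightarrow> lp xs \<in> prods G S"
  unfolding prods_lp by blast

lemma comm_W:
  assumes ab: "a \<in> carrier G" "b \<in> carrier G"
  shows "mset [a, b, inv a, inv b] \<in> zss G (carrier G)" "a \<otimes> b \<otimes> inv a \<otimes> inv b \<in> prods G (mset [a, b, inv a, inv b])"
    "inv (a \<otimes> b \<otimes> inv a \<otimes> inv b) \<in> prods G (mset [a, b, inv a, inv b])"
proof -
  have l1: "lp [a, b, inv a, inv b] = a \<otimes> b \<otimes> inv a \<otimes> inv b" using ab by (simp add: m_assoc)
  have l2: "lp [a, inv a, b, inv b] = \<one>" using ab by (simp add: m_assoc[symmetric])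
  have i: "inv (a \<otimes> b \<otimes> inv a \<otimes> inv b) = b \<otimes> a \<otimes> inv b \<otimes> inv a" using ab by (simp add: inv_mult_group m_assoc)
  have l3: "lp [b, a, inv b, inv a] = b \<otimes> a \<otimes> inv b \<otimes> inv a" using ab by (simp add: m_assoc)
  have m2: "mset [a, inv a, b, inv b] = mset [a, b, inv a, inv b]" by simp
  have m3: "mset [b, a, inv b, inv a] = mset [a, b, inv a, inv b]" by simp
  have s: "mset [a, b, inv a, inv b] \<in> seqs (carrier G)" using ab by (simp add: seqs_def)
  show "mset [a, b, inv a, inv b] \<in> zss G (carrier G)"
    using s in_prods[OF m2] l2 by (simp add: zss_def)
  show "a \<otimes> b \<otimes> inv a \<otimes> inv b \<in> prods G (mset [a, b, inv a, inv b])"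
    using in_prods[of "[a, b, inv a, inv b]"] l1 by simp
  show "inv (a \<otimes> b \<otimes> inv a \<otimes> inv b) \<in> prods G (mset [a, b, inv a, inv b])"
    using in_prods[OF m3] l3 i by simp
qed

lemma D_element_W:
  assumes "z \<in> DG"
  shows "\<exists>W \<in> zss G (carrier G). z \<in> prods G W"
  using assms unfolding derived_def
proof (induction rule: generate.induct)
  case one
  show ?case by (rule bexI[of _ "{#}"]) (auto simp: zss_def)
next
  case (incl h)
  then obtain a b where ab: "a \<in> carrier G" "b \<in> carrier G" "h = a \<otimes> b \<otimes> inv a \<otimes> inv b" by blast
  show ?case using comm_W[OF ab(1,2)] ab(3) by blast
next
  case (inv h)
  then obtain a b where ab: "a \<in> carrier G" "b \<in> carrier G" "h = a \<otimes> b \<otimes> inv a \<otimes> inv b" by blast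
  show ?case using comm_W[OF ab(1,2)] ab(3) by blast
next
  case (eng h1 h2)
  then obtain W1 W2 where W: "W1 \<in> zss G (carrier G)" "h1 \<in> prods G W1" "W2 \<in> zss G (carrier G)" "h2 \<in> prods G W2"
    by blast
  have s: "W1 \<in> seqs (carrier G)" "W2 \<in> seqs (carrier G)" "\<one> \<in> prods G W1" "\<one> \<in> prods G W2"
    using W by (auto simp: zss_def)
  have "h1 \<otimes> h2 \<in> prods G (W1 + W2)" by (rule prods_add[OF s(1,2) W(2,4)])
  moreover have "\<one> \<in> prods G (W1 + W2)" by (rule one_prods_add[OF s])
  ultimately show ?case using s by (intro bexI[of _ "W1 + W2"]) (auto simp: zss_def)
qed

lemma universal_C:
  assumes "finite (carrier G)"
  shows "\<exists>C \<in> zss G (carrier G). DG \<subseteq> prods G C"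
proof -
  have "finite DG" using DG_sub assms finite_subset by blast
  moreover have "\<forall>Z. finite Z \<longrightarrow> Z \<subseteq> DG \<longrightarrow> (\<exists>C \<in> zss G (carrier G). Z \<subseteq> prods G C)"
  proof (intro allI impI)
    fix Z :: "'a set" assume "finite Z" "Z \<subseteq> DG"
    then show "\<exists>C \<in> zss G (carrier G). Z \<subseteq> prods G C"
    proof (induction Z rule: finite_induct)
      case empty
      show ?case by (rule bexI[of _ "{#}"]) (auto simp: zss_def)
    next
      case (insert z Z)
      then obtain C where C: "C \<in> zss G (carrier G)" "Z \<subseteq> prods G C" by blast
      obtain W where W: "W \<in> zss G (carrier G)" "z \<in> prods G W" using D_element_W insert.prems by blast
      have C1: "C \<in> seqs (carrier G)" "\<one> \<in> prods G C" "W \<in> seqs (carrier G)" "\<one> \<in> prods G W"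
        using C W by (auto simp: zss_def)
      have "y \<in> prods G (C + W)" if "y \<in> Z" for y
      proof -
        have yC: "y \<in> prods G C" using that C(2) by blast
        have "y \<in> carrier G" by (rule prods_closed[OF C1(1) yC])
        then show ?thesis using prods_add[OF C1(1,3) yC C1(4)] by simp
      qed
      moreover have "z \<in> prods G (C + W)"
      proof -
        have "z \<in> carrier G" by (rule prods_closed[OF C1(3) W(2)])
        then show ?thesis using prods_add[OF C1(1,3) C1(2) W(2)] by simp
      qed
      moreover have "C + W \<in> zss G (carrier G)" using C1 one_prods_add[OF C1(1) C1(3) C1(2) C1(4)] by (simp add: zss_def)
      ultimately show ?case by blast
    qed
  qed
  ultimately show ?thesis by blast
qed

lemma complete_D:
  assumes "C \<in> zss G (carrier G)" "DG \<subseteq> prods G C"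
    and "S \<in> seqs (carrier G)" "z \<in> prods G S" "z \<in> DG"
  shows "S + C \<in> zss G (carrier G)"
proof -
  have "inv z \<in> DG" using subgroup.m_inv_closed[OF DG_subgroup assms(5)] .
  then have iz: "inv z \<in> prods G C" using assms(2) by blast
  have zc: "z \<in> carrier G" using assms(5) DG_sub by blast
  have Cs: "C \<in> seqs (carrier G)" using assms(1) by (simp add: zss_def)
  have "z \<otimes> inv z \<in> prods G (S + C)" by (rule prods_add[OF assms(3) Cs assms(4) iz])
  moreover have "z \<otimes> inv z = \<one>" by (rule r_inv[OF zc])
  ultimately have "\<one> \<in> prods G (S + C)" by simp
  then show ?thesis using assms(3) Cs unfolding zss_def by simp
qed

end


lemma msmon_simps[simp]: "carrier (msmon M) = M" "x \<otimes>\<^bsub>msmon M\<^esub> y = x + y" "\<one>\<^bsub>msmon M\<^esub> = {#}"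
  by (simp_all add: msmon_def)

lemma seqs_add'[simp]: "S + T \<in> seqs A \<longleftrightarrow> S \<in> seqs A \<and> T \<in> seqs A"
  by (auto simp: seqs_def)

lemma seqs_empty'[simp]: "{#} \<in> seqs A" by (simp add: seqs_def)

lemma msmon_seqs_cmc: "comm_monoid_cancel (msmon (seqs A))"
proof (rule comm_monoid_cancelI)
  show "comm_monoid (msmon (seqs A))"
    by (rule comm_monoidI) (auto simp: add_ac)
qed auto

lemma msmon_divides: "a \<in> seqs A \<Longrightarrow> b \<in> seqs A \<Longrightarrow> a divides\<^bsub>msmon (seqs A)\<^esub> b \<longleftrightarrow> a \<subseteq># b"
  unfolding factor_def
  by (auto simp: subset_mset.le_iff_add)

lemma msmon_Units: "Units (msmon M) = M \<inter> {{#}}"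
  by (auto simp: Units_def)

lemma msmon_seqs_dcc: "divisor_chain_condition_monoid (msmon (seqs A))"
proof (rule divisor_chain_condition_monoid.intro[OF msmon_seqs_cmc])
  show "divisor_chain_condition_monoid_axioms (msmon (seqs A))"
  proof
    have "{(x, y). x \<in> carrier (msmon (seqs A)) \<and> y \<in> carrier (msmon (seqs A)) \<and> properfactor (msmon (seqs A)) x y}
      \<subseteq> measure size"
      by (auto simp: properfactor_def msmon_divides intro!: mset_subset_size simp: subset_mset.less_le_not_le)
    then show "wf {(x, y). x \<in> carrier (msmon (seqs A)) \<and> y \<in> carrier (msmon (seqs A)) \<and> properfactor (msmon (seqs A)) x y}"
      by (rule wf_subset[OF wf_measure])
  qed
qed

lemma msmon_seqs_pc: "primeness_condition_monoid (msmon (seqs A))"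
proof (rule primeness_condition_monoid.intro[OF msmon_seqs_cmc])
  show "primeness_condition_monoid_axioms (msmon (seqs A))"
  proof
    fix a assume a: "a \<in> carrier (msmon (seqs A))" "irreducible (msmon (seqs A)) a"
    then have a0: "a \<noteq> {#}" and irr: "\<And>b. b \<in> seqs A \<Longrightarrow> properfactor (msmon (seqs A)) b a \<Longrightarrow> b = {#}"
      by (auto simp: irreducible_def msmon_Units)
    then obtain x where x: "x \<in># a" by blast
    have xA: "{#x#} \<in> seqs A" using a x by (auto simp: seqs_def)
    have aA: "a \<in> seqs A" using a by simp
    have "a = {#x#}"
    proof (rule ccontr)
      assume "a \<noteq> {#x#}"
      then have "{#x#} \<subset># a" using x by (simp add: subset_mset.less_le)
      then have "properfactor (msmon (seqs A)) {#x#} a"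
        using xA aA by (auto simp: properfactor_def msmon_divides subset_mset.less_le_not_le)
      then show False using irr[OF xA] by simp
    qed
    show "prime (msmon (seqs A)) a"
      unfolding prime_def
    proof (intro conjI ballI impI)
      show "a \<notin> Units (msmon (seqs A))" using a0 by (simp add: msmon_Units)
      fix u w assume uw: "u \<in> carrier (msmon (seqs A))" "w \<in> carrier (msmon (seqs A))"
        "a divides\<^bsub>msmon (seqs A)\<^esub> u \<otimes>\<^bsub>msmon (seqs A)\<^esub> w"
      then have "x \<in># u + w" using \<open>a = {#x#}\<close> xA by (auto simp: msmon_divides)
      then show "a divides\<^bsub>msmon (seqs A)\<^esub> u \<or> a divides\<^bsub>msmon (seqs A)\<^esub> w"
        using uw \<open>a = {#x#}\<close> xA by (auto simp: msmon_divides)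
    qed
  qed
qed

lemma msmon_seqs_factorial: "factorial_monoid (msmon (seqs A))"
  using factorial_condition_one msmon_seqs_dcc msmon_seqs_pc by blast


definition cg :: "'a \<Rightarrow> 'a list list \<Rightarrow> 'a list" where
  "cg g ws = concat (map (Cons g) ws)"

lemma cg_simps[simp]: "cg g [] = []" "cg g (v # ws) = g # v @ cg g ws" "cg g (as @ bs) = cg g as @ cg g bs"
  by (simp_all add: cg_def)

lemma mset_cg: "mset (cg g ws) = replicate_mset (length ws) g + mset (concat ws)"
  by (induction ws) (auto simp: add_ac)

lemma set_cg: "set (cg g ws) \<subseteq> insert g (set (concat ws))"
  by (induction ws) auto

lemma decomp: "\<exists>v0 vs. xs = v0 @ cg g vs \<and> length vs = count (mset xs) g"
proof (induction xs)
  case Nil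
  show ?case by (rule exI[of _ "[]"], rule exI[of _ "[]"]) simp
next
  case (Cons x xs)
  then obtain v0 vs where h: "xs = v0 @ cg g vs" "length vs = count (mset xs) g" by blast
  show ?case
  proof (cases "x = g")
    case True
    then show ?thesis using h by (intro exI[of _ "[]"] exI[of _ "v0 # vs"]) simp
  next
    case False
    then show ?thesis using h by (intro exI[of _ "x # v0"] exI[of _ vs]) simp
  qed
qed

context group begin

lemma pigeon:
  assumes fin: "finite (carrier G)" and g: "g \<in> carrier G"
    and v0: "set v0 \<subseteq> carrier G" and vs: "set (concat vs) \<subseteq> carrier G"
    and len: "length vs \<ge> order G * order G"
  shows "\<exists>as bs cs. vs = as @ bs @ cs \<and> bs \<noteq> [] \<and> order G dvd length bs \<and>
           lp (v0 @ cg g as @ concat bs) = lp (v0 @ cg g as @ cg g bs)"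
proof -
  define N where "N = order G"
  have Npos: "N > 0" using fin unfolding N_def order_def by (simp add: card_gt_0_iff) blast
  define E where "E r = lp (v0 @ cg g (take r vs))" for r
  define Dd where "Dd r = lp (v0 @ concat (take r vs))" for r
  define F where "F r = (E r \<otimes> inv (Dd r), r mod N)" for r
  have takec: "set (concat (take r vs)) \<subseteq> carrier G" for r
    using vs by (auto dest: in_set_takeD)
  have takecg: "set (cg g (take r vs)) \<subseteq> carrier G" for r
    using set_cg[of g "take r vs"] takec[of r] g by blast
  have Ec: "E r \<in> carrier G" for r unfolding E_def using v0 takecg by simp
  have Dc: "Dd r \<in> carrier G" for r unfolding Dd_def using v0 takec by simp
  have img: "F ` {0..length vs} \<subseteq> carrier G \<times> {..<N}"
    using Ec Dc Npos by (auto simp: F_def)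
  have "\<not> inj_on F {0..length vs}"
  proof
    assume "inj_on F {0..length vs}"
    then have "card {0..length vs} \<le> card (carrier G \<times> {..<N})"
      using card_inj_on_le img fin by blast
    also have "\<dots> = N * N" using fin by (simp add: card_cartesian_product N_def order_def)
    finally show False using len unfolding N_def by simp
  qed
  then obtain i j where ij: "i \<in> {0..length vs}" "j \<in> {0..length vs}" "i \<noteq> j" "F i = F j"
    unfolding inj_on_def by blast
  obtain i j where ij: "i < j" "j \<le> length vs" "F i = F j"
  proof (cases "i < j")
    case True then show ?thesis using ij that by auto
  next
    case False then show ?thesis using ij that[of j i] by auto
  qed
  define as where "as = take i vs"
  define bs where "bs = take (j - i) (drop i vs)"
  define cs where "cs = drop j vs"
  have tj: "take j vs = as @ bs" unfolding as_def bs_def using ij take_add[of i "j - i" vs] by simp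
  have split: "vs = as @ bs @ cs" using tj unfolding cs_def by (metis append_assoc append_take_drop_id)
  have lbs: "length bs = j - i" unfolding bs_def using ij by simp
  have "i mod N = j mod N" using ij(3) by (simp add: F_def)
  then have dvd: "N dvd length bs" using ij(1) lbs mod_eq_dvd_iff_nat[of i j N] by simp
  have asc: "set (cg g as) \<subseteq> carrier G" using takecg[of i] unfolding as_def .
  have bsc: "set (concat bs) \<subseteq> carrier G" "set (cg g bs) \<subseteq> carrier G"
    using takec[of j] takecg[of j] tj by auto
  have asc2: "set (concat as) \<subseteq> carrier G" using takec[of i] unfolding as_def .
  have Ej: "E j = E i \<otimes> lp (cg g bs)" unfolding E_def tj using v0 asc bsc as_def
    by (simp add: lp_append m_assoc)
  have Dj: "Dd j = Dd i \<otimes> lp (concat bs)" unfolding Dd_def tj using v0 asc2 bsc as_def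
    by (simp add: lp_append m_assoc)
  have "E i \<otimes> inv (Dd i) = E j \<otimes> inv (Dd j)" using ij by (simp add: F_def)
  then have "E j = E i \<otimes> inv (Dd i) \<otimes> Dd j" using Ec Dc
    by (metis inv_closed inv_solve_right m_closed)
  also have "\<dots> = E i \<otimes> lp (concat bs)"
  proof -
    have lb: "lp (concat bs) \<in> carrier G" using bsc(1) lp_closed by blast
    have c1: "E i \<otimes> inv (Dd i) \<otimes> Dd i = E i" using Ec[of i] Dc[of i] by (simp add: m_assoc)
    have "E i \<otimes> inv (Dd i) \<otimes> Dd j = (E i \<otimes> inv (Dd i) \<otimes> Dd i) \<otimes> lp (concat bs)"
      unfolding Dj using lb Ec[of i] Dc[of i] by (simp only: m_assoc inv_closed m_closed)
    then show ?thesis using c1 by simp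
  qed
  finally have key: "E i \<otimes> lp (concat bs) = E i \<otimes> lp (cg g bs)" using Ej by simp
  have "lp (v0 @ cg g as @ concat bs) = E i \<otimes> lp (concat bs)"
    unfolding E_def as_def[symmetric] using v0 asc bsc by (simp add: lp_append m_assoc)
  also have "\<dots> = E i \<otimes> lp (cg g bs)" by (rule key)
  also have "\<dots> = lp (v0 @ cg g as @ cg g bs)"
    unfolding E_def as_def[symmetric] using v0 asc bsc by (simp add: lp_append m_assoc)
  finally show ?thesis using split dvd lbs ij unfolding N_def by (intro exI[of _ as] exI[of _ bs] exI[of _ cs]) auto
qed

end


lemma set_concat_cg: "set (concat ws) \<subseteq> set (cg g ws)"
  by (induction ws) auto

context group begin

lemma reduce:
  assumes fin: "finite (carrier G)" and g: "g \<in> carrier G" and T: "T \<in> seqs (carrier G)"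
    and cnt: "count T g \<ge> order G * order G" and one: "\<one> \<in> prods G T"
  shows "\<one> \<in> prods G (T - replicate_mset (order G) g)"
proof -
  define N where "N = order G"
  have "\<exists>xs. \<one> = lp xs \<and> mset xs = T" using one by (simp add: prods_lp)
  then obtain xs where xs0: "\<one> = lp xs" "mset xs = T" by blast
  then have xs: "lp xs = \<one>" "mset xs = T" by simp_all
  obtain v0 vs where d: "xs = v0 @ cg g vs" "length vs = count (mset xs) g" using decomp[of xs g] by (elim exE conjE)
  have "set xs = set_mset T" using xs(2) by auto
  then have xsc: "set xs \<subseteq> carrier G" using T unfolding seqs_def by simp
  have v0c: "set v0 \<subseteq> carrier G" using xsc d(1) by auto
  have vsc: "set (concat vs) \<subseteq> carrier G" using xsc d(1) set_concat_cg[of vs g] by auto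
  have len: "length vs \<ge> order G * order G" using d(2) xs(2) cnt by simp
  obtain as bs cs where p: "vs = as @ bs @ cs" "bs \<noteq> []" "order G dvd length bs"
    "lp (v0 @ cg g as @ concat bs) = lp (v0 @ cg g as @ cg g bs)"
    using pigeon[OF fin g v0c vsc len] by blast
  define ys where "ys = v0 @ cg g as @ concat bs @ cg g cs"
  have xs2: "xs = (v0 @ cg g as @ cg g bs) @ cg g cs" using d(1) p(1) by simp
  have ys2: "ys = (v0 @ cg g as @ concat bs) @ cg g cs" unfolding ys_def by simp
  have c1: "set (v0 @ cg g as @ cg g bs) \<subseteq> carrier G" "set (cg g cs) \<subseteq> carrier G"
    using xsc xs2 by auto
  have c2: "set (v0 @ cg g as @ concat bs) \<subseteq> carrier G"
    using c1 set_concat_cg[of bs g] by auto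
  have "lp ys = lp xs"
    unfolding xs2 ys2 using lp_append[OF c1] lp_append[OF c2 c1(2)] p(4) by simp
  then have lys: "lp ys = \<one>" using xs(1) by simp
  have mx: "T = mset ys + replicate_mset (length bs) g"
    unfolding xs(2)[symmetric] d(1) ys_def p(1) by (simp add: mset_cg add_ac)
  obtain k where k: "length bs = N * k" using p(3) unfolding N_def by blast
  have k0: "k \<noteq> 0" using k p(2) by (metis length_0_conv mult_0_right)
  have rep: "replicate_mset (length bs) g = replicate_mset N g + replicate_mset ((k - 1) * N) g"
  proof -
    obtain m where m: "k = Suc m" using k0 not0_implies_Suc by blast
    then have "length bs = N + m * N" using k by simp
    then show ?thesis using m by (intro multiset_eqI) simp
  qed
  have Tm: "T - replicate_mset N g = mset ys + replicate_mset ((k - 1) * N) g"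
    using mx rep by simp
  have ysS: "mset ys \<in> seqs (carrier G)" using T mx by (simp add: seqs_def)
  have rS: "replicate_mset ((k - 1) * N) g \<in> seqs (carrier G)" using g by (simp add: seqs_def)
  have "\<one> \<in> prods G (mset ys)" using in_prods[of ys "mset ys"] lys by simp
  moreover have "\<one> \<in> prods G (replicate_mset ((k - 1) * N) g)" using one_prods_replicate[OF g] N_def by simp
  ultimately show ?thesis unfolding N_def[symmetric] Tm using one_prods_add[OF ysS rS] by simp
qed


lemma eqv_step:
  assumes fin: "finite (carrier G)" and G0: "G0 \<subseteq> carrier G" and y: "y \<in> seqs G0"
    and cnt: "count y g \<ge> order G * order G"
  shows "H_equiv (zss G G0) (msmon (seqs G0)) y (y + replicate_mset (order G) g)"
proof -
  define N where "N = order G"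
  have Npos: "N > 0" using fin unfolding N_def order_def by (simp add: card_gt_0_iff) blast
  have NN: "N * N > 0" using Npos by simp
  have "count y g > 0" using cnt NN unfolding N_def by linarith
  then have "g \<in># y" by simp
  then have gG0: "g \<in> G0" using y by (auto simp: seqs_def)
  then have g: "g \<in> carrier G" using G0 by blast
  have rep: "replicate_mset N g \<in> seqs G0" using gG0 by (simp add: seqs_def)
  have sub: "\<And>S. S \<in> seqs G0 \<Longrightarrow> S \<in> seqs (carrier G)" using G0 seqs_mono by blast
  have "(y + x \<in> zss G G0) = (y + replicate_mset N g + x \<in> zss G G0)" if x: "x \<in> seqs G0" for x
  proof -
    have s1: "y + x \<in> seqs G0" "y + replicate_mset N g + x \<in> seqs G0" using x y rep by simp_all
    have "\<one> \<in> prods G (y + x) \<longleftrightarrow> \<one> \<in> prods G (y + replicate_mset N g + x)"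
    proof
      assume h: "\<one> \<in> prods G (y + x)"
      have "\<one> \<in> prods G (replicate_mset N g)" using one_prods_replicate[OF g, of 1] N_def by simp
      then have "\<one> \<in> prods G (y + x + replicate_mset N g)"
        using one_prods_add[OF sub[OF s1(1)] sub[OF rep] h] by simp
      moreover have "y + x + replicate_mset N g = y + replicate_mset N g + x" by (simp add: add_ac)
      ultimately show "\<one> \<in> prods G (y + replicate_mset N g + x)" by simp
    next
      assume h: "\<one> \<in> prods G (y + replicate_mset N g + x)"
      have "count (y + replicate_mset N g + x) g \<ge> order G * order G" using cnt by simp
      from reduce[OF fin g sub[OF s1(2)] this] h
      have "\<one> \<in> prods G (y + replicate_mset N g + x - replicate_mset (order G) g)" by blast
      moreover have "y + replicate_mset N g + x - replicate_mset (order G) g = y + x"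
        unfolding N_def by (simp add: add_ac)
      ultimately show "\<one> \<in> prods G (y + x)" by simp
    qed
    then show ?thesis using s1 unfolding zss_def by simp
  qed
  then show ?thesis unfolding H_equiv_def msmon_simps N_def by blast
qed

lemma H_equiv_sym: "H_equiv H F y y' \<Longrightarrow> H_equiv H F y' y" by (simp add: H_equiv_def)
lemma H_equiv_trans: "H_equiv H F y y' \<Longrightarrow> H_equiv H F y' y'' \<Longrightarrow> H_equiv H F y y''" by (simp add: H_equiv_def)
lemma H_equiv_refl: "H_equiv H F y y" by (simp add: H_equiv_def)
lemma H_class_eq: "H_equiv H F y y' \<Longrightarrow> H_class H F y = H_class H F y'"
  unfolding H_class_def H_equiv_def by auto

lemma count_msum:
  assumes "finite A"
  shows "count (\<Sum>a\<in>A. replicate_mset (f a) a) b = (if b \<in> A then f b else 0)"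
proof -
  have "count (\<Sum>a\<in>A. replicate_mset (f a) a) b = (\<Sum>a\<in>A. if b = a then f a else 0)"
    by (simp add: count_sum)
  also have "\<dots> = (if b \<in> A then f b else 0)" using assms by (simp add: sum.delta)
  finally show ?thesis .
qed

lemma finite_classes:
  assumes fin: "finite (carrier G)" and G0: "G0 \<subseteq> carrier G"
  shows "finite (H_class (zss G G0) (msmon (seqs G0)) ` seqs G0)"
proof -
  define N where "N = order G"
  define B where "B = N * N + N"
  define R where "R = {y \<in> seqs G0. \<forall>g. count y g < B}"
  have finG0: "finite G0" using fin G0 finite_subset by blast
  have "R \<subseteq> (\<lambda>f. \<Sum>a\<in>G0. replicate_mset (f a) a) ` (G0 \<rightarrow>\<^sub>E {..<B})"
  proof
    fix y assume yR: "y \<in> R"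
    have "y = (\<Sum>a\<in>G0. replicate_mset (restrict (count y) G0 a) a)"
    proof (rule multiset_eqI)
      fix b
      show "count y b = count (\<Sum>a\<in>G0. replicate_mset (restrict (count y) G0 a) a) b"
      proof (cases "b \<in> G0")
        case True then show ?thesis by (simp add: count_msum[OF finG0])
      next
        case False
        then have "b \<notin># y" using yR by (auto simp: R_def seqs_def)
        then show ?thesis using False by (simp add: count_msum[OF finG0] not_in_iff)
      qed
    qed
    moreover have "restrict (count y) G0 \<in> G0 \<rightarrow>\<^sub>E {..<B}" using yR by (auto simp: R_def)
    ultimately show "y \<in> (\<lambda>f. \<Sum>a\<in>G0. replicate_mset (f a) a) ` (G0 \<rightarrow>\<^sub>E {..<B})" by blast
  qed
  then have finR: "finite R" using finite_PiE[OF finG0, of "\<lambda>_. {..<B}"] finite_surj by blast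
  have red: "\<exists>y' \<in> R. H_equiv (zss G G0) (msmon (seqs G0)) y y'" if "y \<in> seqs G0" for y
    using that
  proof (induction y rule: measure_induct_rule[of size])
    case (less y)
    show ?case
    proof (cases "\<forall>g. count y g < B")
      case True
      then have "y \<in> R" using less.prems by (simp add: R_def)
      then show ?thesis using H_equiv_refl[of "zss G G0" "msmon (seqs G0)" y] by blast
    next
      case False
      then obtain g where g: "count y g \<ge> B" using not_less by blast
      define y0 where "y0 = y - replicate_mset N g"
      have yy: "y = y0 + replicate_mset N g"
        unfolding y0_def using g B_def by (intro multiset_eqI) auto
      have y0s: "y0 \<in> seqs G0" using less.prems yy by simp
      have c0: "count y0 g \<ge> order G * order G" using g yy unfolding B_def N_def by simp
      have e1: "H_equiv (zss G G0) (msmon (seqs G0)) y0 y"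
        using eqv_step[OF fin G0 y0s c0] yy N_def by simp
      have Npos: "N > 0" using fin unfolding N_def order_def by (simp add: card_gt_0_iff) blast
      have "size y0 < size y" using yy Npos by simp
      then obtain y' where y': "y' \<in> R" "H_equiv (zss G G0) (msmon (seqs G0)) y0 y'"
        using less.IH y0s by blast
      show ?thesis using y' H_equiv_trans[OF H_equiv_sym[OF e1] y'(2)] by blast
    qed
  qed
  have "H_class (zss G G0) (msmon (seqs G0)) ` seqs G0 \<subseteq> H_class (zss G G0) (msmon (seqs G0)) ` R"
  proof
    fix c assume "c \<in> H_class (zss G G0) (msmon (seqs G0)) ` seqs G0"
    then obtain y where y: "y \<in> seqs G0" "c = H_class (zss G G0) (msmon (seqs G0)) y" by blast
    obtain y' where y': "y' \<in> R" "H_equiv (zss G G0) (msmon (seqs G0)) y y'" using red[OF y(1)] by blast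
    have "c = H_class (zss G G0) (msmon (seqs G0)) y'" using y(2) H_class_eq[OF y'(2)] by simp
    then show "c \<in> H_class (zss G G0) (msmon (seqs G0)) ` R" using y'(1) by blast
  qed
  then show ?thesis using finR finite_subset by blast
qed

end


lemma in_repeat: "x \<in># repeat_mset n A \<Longrightarrow> x \<in># A"
  by (metis count_eq_zero_iff count_repeat_mset mult_0_right)

context group begin

lemma part1:
  assumes fin: "finite (carrier G)" and G0: "G0 \<subseteq> carrier G"
  shows "cofinal (zss G G0) (msmon (seqs G0)) \<and> C_monoid (msmon (zss G G0))"
proof
  have Npos: "order G > 0" using fin unfolding order_def by (simp add: card_gt_0_iff) blast
  show "cofinal (zss G G0) (msmon (seqs G0))"
    unfolding cofinal_def
  proof
    fix \<alpha> assume a: "\<alpha> \<in> carrier (msmon (seqs G0))"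
    then have aS: "\<alpha> \<in> seqs G0" by simp
    let ?h = "repeat_mset (order G) \<alpha>"
    have hS: "?h \<in> seqs G0" using aS unfolding seqs_def by (auto dest!: in_repeat)
    have "\<one> \<in> prods G ?h" using one_prods_repeat[OF seqs_mono[OF G0 aS]] .
    then have hz: "?h \<in> zss G G0" using hS by (simp add: zss_def)
    have "\<alpha> \<subseteq># ?h" using Npos by (simp add: subseteq_mset_def)
    then have "\<alpha> divides\<^bsub>msmon (seqs G0)\<^esub> ?h" using msmon_divides[OF aS hS] by simp
    then show "\<exists>h\<in>zss G G0. \<alpha> divides\<^bsub>msmon (seqs G0)\<^esub> h" using hz by blast
  qed
  show "C_monoid (msmon (zss G G0))"
    unfolding C_monoid_def
  proof (intro exI[of _ "msmon (seqs G0)"] conjI ballI)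
    show "factorial_monoid (msmon (seqs G0))" by (rule msmon_seqs_factorial)
    show "carrier (msmon (zss G G0)) \<subseteq> carrier (msmon (seqs G0))" by (auto simp: zss_def)
    show "\<one>\<^bsub>msmon (zss G G0)\<^esub> = \<one>\<^bsub>msmon (seqs G0)\<^esub>" by simp
    show "\<And>a b. a \<otimes>\<^bsub>msmon (zss G G0)\<^esub> b = a \<otimes>\<^bsub>msmon (seqs G0)\<^esub> b" by simp
    show "carrier (msmon (zss G G0)) \<inter> Units (msmon (seqs G0)) = Units (msmon (zss G G0))"
      by (auto simp: msmon_Units zss_def)
    have "class_star (carrier (msmon (zss G G0))) (msmon (seqs G0)) \<subseteq> H_class (zss G G0) (msmon (seqs G0)) ` seqs G0"
      unfolding class_star_def by auto
    then show "finite (class_star (carrier (msmon (zss G G0))) (msmon (seqs G0)))"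
      using finite_classes[OF fin G0] finite_subset by blast
  qed
qed

lemma counts:
  assumes c3: "card (carrier G) \<ge> 3" and g: "g \<in> carrier G"
  shows "{count S g | S. S \<in> zss G (carrier G)} = (UNIV :: nat set)"
proof -
  have "\<exists>S \<in> zss G (carrier G). count S g = n" for n
  proof -
    define w where "w = inv (g [^] n) \<otimes> inv g"
    have "\<not> carrier G \<subseteq> {g, w}"
    proof
      assume "carrier G \<subseteq> {g, w}"
      then have "card (carrier G) \<le> card {g, w}" by (simp add: card_mono)
      also have "\<dots> \<le> 2" by (simp add: card_insert_if)
      finally show False using c3 by simp
    qed
    then obtain x where x: "x \<in> carrier G" "x \<noteq> g" "x \<noteq> w" by blast
    define y where "y = inv (g [^] n \<otimes> x)"
    have yc: "y \<in> carrier G" using x g unfolding y_def by simp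
    have yg: "y \<noteq> g"
    proof
      assume "y = g"
      then have "g [^] n \<otimes> x = inv g" unfolding y_def using g x
        by (metis inv_inv m_closed nat_pow_closed)
      then have "x = inv (g [^] n) \<otimes> inv g" using g x inv_solve_left by simp
      then show False using x(3) w_def by simp
    qed
    define xs where "xs = replicate n g @ [x, y]"
    have rc: "set (replicate n g) \<subseteq> carrier G" "set [x, y] \<subseteq> carrier G" using g x yc by auto
    have "lp xs = g [^] n \<otimes> (x \<otimes> y)" unfolding xs_def lp_append[OF rc] using g x yc
      by (simp add: lp_replicate)
    also have "\<dots> = \<one>" unfolding y_def using g x by (simp add: m_assoc[symmetric])
    finally have "\<one> \<in> prods G (mset xs)" using in_prods[of xs] by simp
    moreover have "mset xs \<in> seqs (carrier G)" using g x yc by (auto simp: xs_def seqs_def)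
    moreover have "count (mset xs) g = n" using x yg by (simp add: xs_def)
    ultimately show ?thesis by (auto simp: zss_def)
  qed
  then show ?thesis by (metis (mono_tags, lifting) UNIV_eq_I mem_Collect_eq)
qed

end


lemma vec_add: "vec (S + T) = (\<lambda>g. vec S g + vec T g)"
  by (simp add: vec_def fun_eq_iff)

lemma vec_empty: "vec {#} = (\<lambda>g. 0)"
  by (simp add: vec_def fun_eq_iff)

lemma vec_inj: "vec S = vec T \<Longrightarrow> S = T"
  unfolding vec_def by (metis (mono_tags, lifting) multiset_eqI of_nat_eq_iff)

lemma vec_ge0: "vec S g \<ge> 0" by (simp add: vec_def)

lemma vec_sum_eq: "(\<lambda>g. vec A g + vec B g) = (\<lambda>g. vec C g + vec D g) \<Longrightarrow> A + B = C + D"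
  using vec_inj[of "A + B" "C + D"] by (simp add: vec_add)

lemma vec_outside: "S \<in> seqs A \<Longrightarrow> g \<notin> A \<Longrightarrow> vec S g = 0"
  by (auto simp: vec_def seqs_def not_in_iff[symmetric])

lemma vmon_simps[simp]: "carrier (vmon K) = K" "x \<otimes>\<^bsub>vmon K\<^esub> y = (\<lambda>g. x g + y g)" "\<one>\<^bsub>vmon K\<^esub> = (\<lambda>g. 0)"
  by (simp_all add: vmon_def)

lemma qgrp_iff: "x \<in> qgrp K \<longleftrightarrow> (\<exists>a b. a \<in> K \<and> b \<in> K \<and> x = (\<lambda>g. a g - b g))"
  unfolding qgrp_def by blast

locale addcl =
  fixes K :: "('a \<Rightarrow> int) set"
  assumes add: "a \<in> K \<Longrightarrow> b \<in> K \<Longrightarrow> (\<lambda>g. a g + b g) \<in> K"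
    and zero: "(\<lambda>g. 0) \<in> K"
begin

lemma sub_q: "a \<in> K \<Longrightarrow> a \<in> qgrp K"
  unfolding qgrp_iff using zero by (intro exI[of _ a] exI[of _ "\<lambda>g. 0"]) simp

lemma q_add: assumes "x \<in> qgrp K" "y \<in> qgrp K" shows "(\<lambda>g. x g + y g) \<in> qgrp K"
proof -
  obtain a b where ab: "a \<in> K" "b \<in> K" "x = (\<lambda>g. a g - b g)" using assms(1) unfolding qgrp_iff by blast
  obtain c d where cd: "c \<in> K" "d \<in> K" "y = (\<lambda>g. c g - d g)" using assms(2) unfolding qgrp_iff by blast
  have "(\<lambda>g. x g + y g) = (\<lambda>g. (\<lambda>g. a g + c g) g - (\<lambda>g. b g + d g) g)" using ab(3) cd(3) by (simp add: fun_eq_iff)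
  moreover have "(\<lambda>g. a g + c g) \<in> K" "(\<lambda>g. b g + d g) \<in> K" using ab cd add by blast+
  ultimately show ?thesis unfolding qgrp_iff by blast
qed

lemma q_neg: assumes "x \<in> qgrp K" shows "(\<lambda>g. - x g) \<in> qgrp K"
proof -
  obtain a b where ab: "a \<in> K" "b \<in> K" "x = (\<lambda>g. a g - b g)" using assms(1) unfolding qgrp_iff by blast
  have "(\<lambda>g. - x g) = (\<lambda>g. b g - a g)" using ab(3) by (simp add: fun_eq_iff)
  then show ?thesis using ab(1,2) unfolding qgrp_iff by blast
qed

lemma q_sub: assumes "x \<in> qgrp K" "y \<in> qgrp K" shows "(\<lambda>g. x g - y g) \<in> qgrp K"
  using q_add[OF assms(1) q_neg[OF assms(2)]] by simp

lemma q_zero: "(\<lambda>g. 0) \<in> qgrp K" using sub_q zero by blast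

lemma qq: "qgrp (qgrp K) = qgrp K"
proof
  show "qgrp (qgrp K) \<subseteq> qgrp K"
  proof
    fix x assume "x \<in> qgrp (qgrp K)"
    then obtain a b where "a \<in> qgrp K" "b \<in> qgrp K" "x = (\<lambda>g. a g - b g)" unfolding qgrp_iff[of x "qgrp K"] by blast
    then show "x \<in> qgrp K" using q_sub by simp
  qed
  show "qgrp K \<subseteq> qgrp (qgrp K)"
  proof
    fix x assume "x \<in> qgrp K"
    then show "x \<in> qgrp (qgrp K)" unfolding qgrp_iff[of x "qgrp K"] using q_zero
      by (intro exI[of _ x] exI[of _ "\<lambda>g. 0"]) simp
  qed
qed

lemma comm_group: "comm_group (vmon (qgrp K))"
proof (rule comm_groupI)
  fix x assume x: "x \<in> carrier (vmon (qgrp K))"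
  then show "\<exists>y\<in>carrier (vmon (qgrp K)). y \<otimes>\<^bsub>vmon (qgrp K)\<^esub> x = \<one>\<^bsub>vmon (qgrp K)\<^esub>"
    using q_neg[of x] by (intro bexI[of _ "\<lambda>g. - x g"]) auto
qed (auto simp: q_add q_zero)

lemma inv_q: "x \<in> qgrp K \<Longrightarrow> inv\<^bsub>vmon (qgrp K)\<^esub> x = (\<lambda>g. - x g)"
  using group.inv_equality[of "vmon (qgrp K)" "\<lambda>g. - x g" x] comm_group q_neg
  by (simp add: comm_group.axioms(2))

end

lemma qgrp_mono: "K \<subseteq> L \<Longrightarrow> qgrp K \<subseteq> qgrp L"
  unfolding qgrp_def by blast

context group begin

lemma zss_add: assumes "A \<in> zss G (carrier G)" "B \<in> zss G (carrier G)" shows "A + B \<in> zss G (carrier G)"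
proof -
  have h: "A \<in> seqs (carrier G)" "B \<in> seqs (carrier G)" "\<one> \<in> prods G A" "\<one> \<in> prods G B"
    using assms unfolding zss_def by auto
  show ?thesis using one_prods_add[OF h] h(1,2) unfolding zss_def by simp
qed

lemma D_pow: "s \<in> DG \<Longrightarrow> s [^] (n::nat) \<in> DG"
  by (induction n) (auto intro: subgroup.one_closed[OF DG_subgroup] subgroup.m_closed[OF DG_subgroup])

lemma addcl_M: "addcl (vec ` zss G (carrier G))"
proof
  fix a b assume "a \<in> vec ` zss G (carrier G)" "b \<in> vec ` zss G (carrier G)"
  then obtain A B where AB: "A \<in> zss G (carrier G)" "B \<in> zss G (carrier G)" "a = vec A" "b = vec B" by blast
  have "(\<lambda>g. a g + b g) = vec (A + B)" using AB(3,4) by (simp add: vec_add)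
  moreover have "A + B \<in> zss G (carrier G)" using zss_add[OF AB(1,2)] .
  ultimately show "(\<lambda>g. a g + b g) \<in> vec ` zss G (carrier G)" by (rule image_eqI)
next
  have "{#} \<in> zss G (carrier G)" by (simp add: zss_def)
  then show "(\<lambda>g. 0) \<in> vec ` zss G (carrier G)" using vec_empty[symmetric] by (rule image_eqI[rotated])
qed

lemma addcl_F: "addcl (vec ` seqs (carrier G))"
proof
  fix a b assume "a \<in> vec ` seqs (carrier G)" "b \<in> vec ` seqs (carrier G)"
  then obtain A B where AB: "A \<in> seqs (carrier G)" "B \<in> seqs (carrier G)" "a = vec A" "b = vec B" by blast
  have "(\<lambda>g. a g + b g) = vec (A + B)" using AB(3,4) by (simp add: vec_add)
  moreover have "A + B \<in> seqs (carrier G)" using AB(1,2) by simp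
  ultimately show "(\<lambda>g. a g + b g) \<in> vec ` seqs (carrier G)" by (rule image_eqI)
next
  show "(\<lambda>g. 0) \<in> vec ` seqs (carrier G)" using vec_empty[symmetric] seqs_empty by (rule image_eqI)
qed

lemma prod_in_D:
  assumes "A \<in> zss G (carrier G)" "B \<in> zss G (carrier G)" "S \<in> seqs (carrier G)" "S + B = A"
    "s \<in> prods G S"
  shows "s \<in> DG"
proof -
  have Bs: "B \<in> seqs (carrier G)" "\<one> \<in> prods G B" using assms(2) by (auto simp: zss_def)
  have As: "A \<in> seqs (carrier G)" "\<one> \<in> prods G A" using assms(1) by (auto simp: zss_def)
  have sc: "s \<in> carrier G" using prods_closed[OF assms(3,5)] .
  have "s \<otimes> \<one> \<in> prods G (S + B)" using prods_add[OF assms(3) Bs(1) assms(5) Bs(2)] .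
  then have "s \<in> prods G A" using sc assms(4) by simp
  then have "DG #> s = DG #> \<one>" using rho_prods[OF As(1) _ As(2)] by blast
  then show ?thesis using rho_one rho_one_iff[OF sc] by simp
qed

lemma repeat_in_D:
  assumes "S \<in> seqs (carrier G)" "s \<in> prods G S" "s \<in> DG"
  shows "s [^] n \<in> prods G (repeat_mset n S)"
proof -
  have "\<exists>xs. s = lp xs \<and> mset xs = S" using assms(2) by (simp add: prods_lp)
  then obtain xs where xs: "s = lp xs" "mset xs = S" by blast
  have xc: "set xs \<subseteq> carrier G" using assms(1) xs(2) unfolding seqs_def by auto
  have "mset (concat (replicate n xs)) = repeat_mset n S" using xs(2) by (induction n) auto
  moreover have "lp (concat (replicate n xs)) = s [^] n" using lp_concat_replicate[OF xc] xs(1) by simp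
  ultimately show ?thesis using in_prods by metis
qed

lemma cic_char:
  assumes fin: "finite (carrier G)"
  shows "cic (vec ` zss G (carrier G)) = qgrp (vec ` zss G (carrier G)) \<inter> vec ` seqs (carrier G)"
proof
  interpret M: addcl "vec ` zss G (carrier G)" by (rule addcl_M)
  show "cic (vec ` zss G (carrier G)) \<subseteq> qgrp (vec ` zss G (carrier G)) \<inter> vec ` seqs (carrier G)"
  proof
    fix x assume x: "x \<in> cic (vec ` zss G (carrier G))"
    then have xq: "x \<in> qgrp (vec ` zss G (carrier G))" unfolding cic_def by blast
    obtain c where c: "c \<in> vec ` zss G (carrier G)"
      "\<And>n::nat. n \<ge> 1 \<Longrightarrow> (\<lambda>g. c g + int n * x g) \<in> vec ` zss G (carrier G)"
      using x unfolding cic_def by blast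
    obtain a b where ab: "a \<in> vec ` zss G (carrier G)" "b \<in> vec ` zss G (carrier G)" "x = (\<lambda>g. a g - b g)"
      using xq unfolding qgrp_iff by blast
    obtain A0 B0 where AB0: "A0 \<in> seqs (carrier G)" "B0 \<in> seqs (carrier G)" "a = vec A0" "b = vec B0"
      using ab(1,2) unfolding zss_def by blast
    have out: "x g = 0" if "g \<notin> carrier G" for g
      using ab(3) AB0 vec_outside[OF AB0(1) that] vec_outside[OF AB0(2) that] by simp
    have pos: "x g \<ge> 0" for g
    proof (rule ccontr)
      assume neg: "\<not> x g \<ge> 0"
      define n where "n = nat (c g) + 1"
      have n1: "n \<ge> 1" unfolding n_def by simp
      have "(\<lambda>g. c g + int n * x g) \<in> vec ` zss G (carrier G)" using c(2)[OF n1] .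
      then obtain Z where Z: "(\<lambda>g. c g + int n * x g) = vec Z" by blast
      have "c g + int n * x g = vec Z g" using fun_cong[OF Z, of g] by simp
      then have "c g + int n * x g \<ge> 0" using vec_ge0[of Z g] by simp
      moreover obtain Z' where "c = vec Z'" using c(1) by blast
      then have "c g \<ge> 0" using vec_ge0[of Z' g] by simp
      moreover have "int n * x g \<le> - int n"
      proof -
        have "x g \<le> -1" using neg by simp
        then have "int n * x g \<le> int n * (-1)" by (rule mult_left_mono) simp
        then show ?thesis by simp
      qed
      moreover have "int n = c g + 1" unfolding n_def using \<open>c g \<ge> 0\<close> by simp
      ultimately show False by linarith
    qed
    define T where "T = (\<Sum>a\<in>carrier G. replicate_mset (nat (x a)) a)"
    have "vec T = x" unfolding vec_def T_def
      using count_msum[OF fin] out pos by (auto simp: fun_eq_iff)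
    moreover have "T \<in> seqs (carrier G)" unfolding seqs_def
    proof (intro CollectI subsetI)
      fix z assume "z \<in># T"
      then have "count T z \<noteq> 0" by simp
      then show "z \<in> carrier G" using count_msum[OF fin, of "\<lambda>a. nat (x a)" z] unfolding T_def
        by (simp split: if_splits)
    qed
    ultimately show "x \<in> qgrp (vec ` zss G (carrier G)) \<inter> vec ` seqs (carrier G)" using xq by blast
  qed
  show "qgrp (vec ` zss G (carrier G)) \<inter> vec ` seqs (carrier G) \<subseteq> cic (vec ` zss G (carrier G))"
  proof
    fix x assume x: "x \<in> qgrp (vec ` zss G (carrier G)) \<inter> vec ` seqs (carrier G)"
    have xF: "x \<in> vec ` seqs (carrier G)" and xq: "x \<in> qgrp (vec ` zss G (carrier G))" using x by simp_all
    obtain S where S: "S \<in> seqs (carrier G)" "x = vec S" using xF by (rule imageE) simp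
    obtain a b where ab: "a \<in> vec ` zss G (carrier G)" "b \<in> vec ` zss G (carrier G)" "x = (\<lambda>g. a g - b g)"
      using xq unfolding qgrp_iff by blast
    obtain A where A: "A \<in> zss G (carrier G)" "a = vec A" using ab(1) by (rule imageE) simp
    obtain B where B: "B \<in> zss G (carrier G)" "b = vec B" using ab(2) by (rule imageE) simp
    note AB = A(1) B(1) A(2) B(2)
    have e: "vec S = (\<lambda>g. a g - b g)" by (simp only: S(2)[symmetric] ab(3))
    have "(\<lambda>g. vec S g + vec B g) = (\<lambda>g. vec A g + vec {#} g)"
    proof
      fix g show "vec S g + vec B g = vec A g + vec {#} g" using fun_cong[OF e, of g] AB(3,4) by (simp add: vec_empty)
    qed
    then have SBA: "S + B = A" using vec_sum_eq[of S B A "{#}"] by simp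
    obtain s where s: "s \<in> prods G S" using prods_ne by blast
    have sD: "s \<in> DG" using prod_in_D[OF AB(1,2) S(1) SBA s] .
    obtain C where C: "C \<in> zss G (carrier G)" "DG \<subseteq> prods G C" using universal_C[OF fin] by blast
    have "(\<lambda>g. vec C g + int n * x g) \<in> vec ` zss G (carrier G)" for n :: nat
    proof -
      have rS: "repeat_mset n S \<in> seqs (carrier G)" using S(1) by (auto simp: seqs_def dest!: in_repeat)
      have "s [^] n \<in> DG" using D_pow[OF sD] .
      then have "repeat_mset n S + C \<in> zss G (carrier G)"
        using complete_D[OF C rS repeat_in_D[OF S(1) s sD]] by blast
      moreover have "(\<lambda>g. vec C g + int n * x g) = vec (repeat_mset n S + C)"
        using S(2) by (simp add: vec_def fun_eq_iff)
      ultimately show ?thesis by (rule image_eqI[rotated])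
    qed
    moreover have "vec C \<in> vec ` zss G (carrier G)" using C(1) by (rule imageI)
    moreover have "x \<in> qgrp (vec ` zss G (carrier G))" using x by simp
    ultimately show "x \<in> cic (vec ` zss G (carrier G))" unfolding cic_def by blast
  qed
qed

end


lemma count_image_inj: "inj f \<Longrightarrow> count (image_mset f A) (f x) = count A x"
  by (induction A) (auto dest: injD)

lemma vsingle_inj: "inj (\<lambda>g. vec {#g#})"
  by (rule injI) (drule vec_inj, simp)

context group begin

lemma vdiv:
  assumes "S \<in> seqs (carrier G)" "T \<in> seqs (carrier G)"
  shows "vec S divides\<^bsub>vmon (vec ` seqs (carrier G))\<^esub> vec T \<longleftrightarrow> S \<subseteq># T"
proof
  assume "vec S divides\<^bsub>vmon (vec ` seqs (carrier G))\<^esub> vec T"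
  then obtain c where c: "c \<in> vec ` seqs (carrier G)" "vec T = (\<lambda>g. vec S g + c g)"
    unfolding factor_def by auto
  obtain C where C: "C \<in> seqs (carrier G)" "c = vec C" using c(1) by (rule imageE) simp
  have "vec T = vec (S + C)" using c(2) C(2) by (simp add: vec_add)
  then have "T = S + C" by (rule vec_inj)
  then show "S \<subseteq># T" by simp
next
  assume "S \<subseteq># T"
  then have e: "T = S + (T - S)" by simp
  have "T - S \<in> seqs (carrier G)" using assms(2) by (auto simp: seqs_def dest: in_diffD)
  moreover have "vec T = (\<lambda>g. vec S g + vec (T - S) g)" by (subst e) (simp add: vec_add)
  ultimately show "vec S divides\<^bsub>vmon (vec ` seqs (carrier G))\<^esub> vec T"
    unfolding factor_def by auto
qed

lemma free_F:
  assumes fin: "finite (carrier G)"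
  shows "free_abelian (vmon (vec ` seqs (carrier G)))"
proof -
  define P where "P = (\<lambda>g. vec {#g#}) ` carrier G"
  define f where "f = (\<lambda>(m :: ('a \<Rightarrow> int) multiset) a. int (count m (vec {#a#})))"
  have inP: "vec {#a#} \<in> P \<longleftrightarrow> a \<in> carrier G" for a
    unfolding P_def using vsingle_inj by (auto dest: injD)
  have inj: "inj_on f {m. set_mset m \<subseteq> P}"
  proof (rule inj_onI)
    fix m n assume m: "m \<in> {m. set_mset m \<subseteq> P}" and n: "n \<in> {m. set_mset m \<subseteq> P}" and e: "f m = f n"
    show "m = n"
    proof (rule multiset_eqI)
      fix p show "count m p = count n p"
      proof (cases "p \<in> P")
        case True
        then obtain a where a: "p = vec {#a#}" unfolding P_def by blast
        have "f m a = f n a" using e by simp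
        then show ?thesis unfolding f_def a by simp
      next
        case False
        then have "p \<notin># m" "p \<notin># n" using m n by auto
        then show ?thesis by (simp add: not_in_iff)
      qed
    qed
  qed
  have img: "f ` {m. set_mset m \<subseteq> P} = vec ` seqs (carrier G)"
  proof
    show "f ` {m. set_mset m \<subseteq> P} \<subseteq> vec ` seqs (carrier G)"
    proof
      fix y assume "y \<in> f ` {m. set_mset m \<subseteq> P}"
      then obtain m where m: "set_mset m \<subseteq> P" "y = f m" by blast
      define T where "T = (\<Sum>a\<in>carrier G. replicate_mset (count m (vec {#a#})) a)"
      have cT: "count T a = (if a \<in> carrier G then count m (vec {#a#}) else 0)" for a
        unfolding T_def by (rule count_msum[OF fin])
      have "count m (vec {#a#}) = 0" if "a \<notin> carrier G" for a
        using m(1) inP[of a] that by (auto simp: not_in_iff[symmetric])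
      then have "y = vec T"
      proof -
        assume z: "\<And>a. a \<notin> carrier G \<Longrightarrow> count m (vec {#a#}) = 0"
        show "y = vec T"
        proof
          fix a show "y a = vec T a"
            using cT[of a] z[of a] unfolding m(2) f_def vec_def[of T] by (cases "a \<in> carrier G") simp_all
        qed
      qed
      moreover have "T \<in> seqs (carrier G)" unfolding seqs_def
      proof (intro CollectI subsetI)
        fix z assume "z \<in># T"
        then have "count T z \<noteq> 0" by simp
        then show "z \<in> carrier G" using cT[of z] by (simp split: if_splits)
      qed
      ultimately show "y \<in> vec ` seqs (carrier G)" by blast
    qed
    show "vec ` seqs (carrier G) \<subseteq> f ` {m. set_mset m \<subseteq> P}"
    proof
      fix y assume "y \<in> vec ` seqs (carrier G)"
      then obtain S where S: "S \<in> seqs (carrier G)" "y = vec S" by blast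
      define m where "m = image_mset (\<lambda>g. vec {#g#}) S"
      have "set_mset m \<subseteq> P" using S(1) unfolding m_def P_def seqs_def by auto
      moreover have "f m = y"
      proof
        fix a show "f m a = y a" unfolding f_def m_def S(2) vec_def[of S]
          using count_image_inj[OF vsingle_inj, of S a] by simp
      qed
      ultimately show "y \<in> f ` {m. set_mset m \<subseteq> P}" by blast
    qed
  qed
  show ?thesis unfolding free_abelian_def
  proof (intro exI[of _ P] exI[of _ f] conjI allI impI)
    show "bij_betw f {m. set_mset m \<subseteq> P} (carrier (vmon (vec ` seqs (carrier G))))"
      using inj img by (simp add: bij_betw_def)
    show "f {#} = \<one>\<^bsub>vmon (vec ` seqs (carrier G))\<^esub>" by (simp add: f_def fun_eq_iff)
    fix m n show "f (m + n) = f m \<otimes>\<^bsub>vmon (vec ` seqs (carrier G))\<^esub> f n" by (simp add: f_def fun_eq_iff)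
  qed
qed


lemma M_sub_cic:
  assumes fin: "finite (carrier G)"
  shows "vec ` zss G (carrier G) \<subseteq> cic (vec ` zss G (carrier G))"
proof -
  interpret M: addcl "vec ` zss G (carrier G)" by (rule addcl_M)
  have "vec ` zss G (carrier G) \<subseteq> vec ` seqs (carrier G)" by (auto simp: zss_def)
  then show ?thesis unfolding cic_char[OF fin] using M.sub_q by blast
qed

lemma gcd_part:
  assumes fin: "finite (carrier G)" and c3: "card (carrier G) \<ge> 3"
    and al: "\<alpha> \<in> vec ` seqs (carrier G)"
  shows "\<exists>A. finite A \<and> A \<subseteq> id ` cic (vec ` zss G (carrier G)) \<and> is_gcd_set (vmon (vec ` seqs (carrier G))) \<alpha> A"
proof -
  obtain S where S: "S \<in> seqs (carrier G)" "\<alpha> = vec S" using al by (rule imageE) simp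
  obtain s where s: "s \<in> prods G S" using prods_ne by blast
  have sc: "s \<in> carrier G" using prods_closed[OF S(1) s] .
  define t where "t = inv s"
  have tc: "t \<in> carrier G" unfolding t_def using sc by simp
  have "\<not> carrier G \<subseteq> {\<one>, t}"
  proof
    assume "carrier G \<subseteq> {\<one>, t}"
    then have "card (carrier G) \<le> card {\<one>, t}" by (simp add: card_mono)
    also have "\<dots> \<le> 2" by (simp add: card_insert_if)
    finally show False using c3 by simp
  qed
  then obtain a where a: "a \<in> carrier G" "a \<noteq> \<one>" "a \<noteq> t" by blast
  define b where "b = inv a \<otimes> t"
  have bc: "b \<in> carrier G" unfolding b_def using a tc by simp
  have bt: "b \<noteq> t"
  proof
    assume "b = t"
    then have "inv a \<otimes> t = \<one> \<otimes> t" using tc unfolding b_def by simp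
    then have "inv a = \<one>" using r_cancel a tc by blast
    then have "a = \<one>" using a by (metis inv_inv one_closed inv_one)
    then show False using a by simp
  qed
  define T1 where "T1 = {#t#}"
  define T2 where "T2 = {#a, b#}"
  have T1s: "T1 \<in> seqs (carrier G)" and T2s: "T2 \<in> seqs (carrier G)"
    using tc a bc by (auto simp: T1_def T2_def seqs_def)
  have st: "s \<otimes> t = \<one>" unfolding t_def using sc by simp
  have "t \<in> prods G T1" unfolding T1_def using prods_single[OF tc] by simp
  then have "s \<otimes> t \<in> prods G (S + T1)" using prods_add[OF S(1) T1s s] by blast
  then have z1: "S + T1 \<in> zss G (carrier G)" using st S(1) T1s by (simp add: zss_def)
  have "lp [a, b] = t" unfolding b_def using a tc by (simp add: m_assoc[symmetric])
  then have "t \<in> prods G T2" using in_prods[of "[a, b]" T2] unfolding T2_def by simp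
  then have "s \<otimes> t \<in> prods G (S + T2)" using prods_add[OF S(1) T2s s] by blast
  then have z2: "S + T2 \<in> zss G (carrier G)" using st S(1) T2s by (simp add: zss_def)
  define A where "A = {vec (S + T1), vec (S + T2)}"
  have "A \<subseteq> vec ` zss G (carrier G)" unfolding A_def using z1 z2 by blast
  then have Asub: "A \<subseteq> id ` cic (vec ` zss G (carrier G))" using M_sub_cic[OF fin] by auto
  have ST1: "S + T1 \<in> seqs (carrier G)" and ST2: "S + T2 \<in> seqs (carrier G)" using S(1) T1s T2s by simp_all
  have gcd: "is_gcd_set (vmon (vec ` seqs (carrier G))) \<alpha> A"
    unfolding is_gcd_set_def
  proof (intro conjI ballI impI)
    show "\<alpha> \<in> carrier (vmon (vec ` seqs (carrier G)))" using al by simp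
    fix x assume "x \<in> A"
    then have "x = vec (S + T1) \<or> x = vec (S + T2)" unfolding A_def by blast
    then show "\<alpha> divides\<^bsub>vmon (vec ` seqs (carrier G))\<^esub> x"
      unfolding S(2) using vdiv[OF S(1) ST1] vdiv[OF S(1) ST2] by auto
  next
    fix \<delta> assume d: "\<delta> \<in> carrier (vmon (vec ` seqs (carrier G)))"
      and dv: "\<forall>x\<in>A. \<delta> divides\<^bsub>vmon (vec ` seqs (carrier G))\<^esub> x"
    obtain U where U: "U \<in> seqs (carrier G)" "\<delta> = vec U" using d by (auto elim!: imageE)
    have "U \<subseteq># S + T1" using dv vdiv[OF U(1) ST1] U(2) unfolding A_def by auto
    moreover have "U \<subseteq># S + T2" using dv vdiv[OF U(1) ST2] U(2) unfolding A_def by auto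
    ultimately have "U \<subseteq># S"
      unfolding subseteq_mset_def T1_def T2_def using a(3) bt
      by (metis add_mset_add_single count_add_mset count_single count_union add.right_neutral le_antisym nat_le_linear)
    then show "\<delta> divides\<^bsub>vmon (vec ` seqs (carrier G))\<^esub> \<alpha>"
      unfolding S(2) U(2) using vdiv[OF U(1) S(1)] by simp
  qed
  show ?thesis using Asub gcd unfolding A_def by (intro exI[of _ A]) (simp add: A_def)
qed


lemma div_theory:
  assumes fin: "finite (carrier G)" and c3: "card (carrier G) \<ge> 3"
  shows "divisor_theory (vmon (cic (vec ` zss G (carrier G)))) (vmon (vec ` seqs (carrier G))) id"
proof -
  interpret M: addcl "vec ` zss G (carrier G)" by (rule addcl_M)
  have cc: "cic (vec ` zss G (carrier G)) = qgrp (vec ` zss G (carrier G)) \<inter> vec ` seqs (carrier G)"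
    by (rule cic_char[OF fin])
  show ?thesis unfolding divisor_theory_def
  proof (intro conjI ballI impI)
    show "id \<in> hom (vmon (cic (vec ` zss G (carrier G)))) (vmon (vec ` seqs (carrier G)))"
      unfolding hom_def using cc by auto
    show "id \<one>\<^bsub>vmon (cic (vec ` zss G (carrier G)))\<^esub> = \<one>\<^bsub>vmon (vec ` seqs (carrier G))\<^esub>" by simp
    show "free_abelian (vmon (vec ` seqs (carrier G)))" by (rule free_F[OF fin])
  next
    fix a b assume a: "a \<in> carrier (vmon (cic (vec ` zss G (carrier G))))"
      and b: "b \<in> carrier (vmon (cic (vec ` zss G (carrier G))))"
      and d: "id a divides\<^bsub>vmon (vec ` seqs (carrier G))\<^esub> id b"
    obtain c where c: "c \<in> vec ` seqs (carrier G)" "b = (\<lambda>g. a g + c g)"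
      using d unfolding factor_def by auto
    have aq: "a \<in> qgrp (vec ` zss G (carrier G))" and bq: "b \<in> qgrp (vec ` zss G (carrier G))"
      using a b cc by auto
    have ce: "c = (\<lambda>g. b g - a g)" using c(2) by (simp add: fun_eq_iff)
    have "c \<in> qgrp (vec ` zss G (carrier G))" unfolding ce using M.q_sub[OF bq aq] .
    then have "c \<in> cic (vec ` zss G (carrier G))" using c(1) cc by simp
    then show "a divides\<^bsub>vmon (cic (vec ` zss G (carrier G)))\<^esub> b"
      unfolding factor_def using c(2) by auto
  next
    fix \<alpha> assume "\<alpha> \<in> carrier (vmon (vec ` seqs (carrier G)))"
    then show "\<exists>A. finite A \<and> A \<subseteq> id ` carrier (vmon (cic (vec ` zss G (carrier G)))) \<and>
      is_gcd_set (vmon (vec ` seqs (carrier G))) \<alpha> A"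
      using gcd_part[OF fin c3] by simp
  qed
qed

lemma qgrp_cic:
  assumes fin: "finite (carrier G)"
  shows "qgrp (cic (vec ` zss G (carrier G))) = qgrp (vec ` zss G (carrier G))"
proof -
  interpret M: addcl "vec ` zss G (carrier G)" by (rule addcl_M)
  have "cic (vec ` zss G (carrier G)) \<subseteq> qgrp (vec ` zss G (carrier G))" unfolding cic_def by blast
  then have "qgrp (cic (vec ` zss G (carrier G))) \<subseteq> qgrp (vec ` zss G (carrier G))"
    using qgrp_mono M.qq by blast
  moreover have "qgrp (vec ` zss G (carrier G)) \<subseteq> qgrp (cic (vec ` zss G (carrier G)))"
    using qgrp_mono[OF M_sub_cic[OF fin]] .
  ultimately show ?thesis by blast
qed

end


context group begin

abbreviation "QF \<equiv> vmon (qgrp (vec ` seqs (carrier G)))"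
abbreviation "QB \<equiv> qgrp (vec ` zss G (carrier G))"

lemma QF_comm: "comm_group QF"
  using addcl.comm_group[OF addcl_F] .

lemma QF_group: "group QF"
  using QF_comm comm_group.axioms(2) by blast

lemma MF: "vec ` zss G (carrier G) \<subseteq> vec ` seqs (carrier G)" by (auto simp: zss_def)

lemma QB_sub: "QB \<subseteq> carrier QF" using qgrp_mono[OF MF] by simp

lemma QB_subgroup: "subgroup QB QF"
proof (rule group.subgroupI[OF QF_group QB_sub])
  interpret M: addcl "vec ` zss G (carrier G)" by (rule addcl_M)
  interpret F: addcl "vec ` seqs (carrier G)" by (rule addcl_F)
  show "QB \<noteq> {}" using M.q_zero by blast
  fix a assume a: "a \<in> QB"
  then have "a \<in> qgrp (vec ` seqs (carrier G))" using QB_sub by auto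
  then have "inv\<^bsub>QF\<^esub> a = (\<lambda>g. - a g)" by (rule F.inv_q)
  then show "inv\<^bsub>QF\<^esub> a \<in> QB" using M.q_neg[OF a] by simp
next
  interpret M: addcl "vec ` zss G (carrier G)" by (rule addcl_M)
  fix a b assume "a \<in> QB" "b \<in> QB"
  then show "a \<otimes>\<^bsub>QF\<^esub> b \<in> QB" using M.q_add by simp
qed

lemma QB_normal: "QB \<lhd> QF"
  using comm_group.subgroup_imp_normal[OF QF_comm QB_subgroup] .

lemma QFQB_group: "group (QF Mod QB)"
  using normal.factorgroup_is_group[OF QB_normal] .

lemma coset_absorb:
  assumes "q \<in> QB" "x \<in> carrier QF"
  shows "QB #>\<^bsub>QF\<^esub> (q \<otimes>\<^bsub>QF\<^esub> x) = QB #>\<^bsub>QF\<^esub> x"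
proof -
  have qc: "q \<in> carrier QF" using assms(1) QB_sub by blast
  have "QB #>\<^bsub>QF\<^esub> (q \<otimes>\<^bsub>QF\<^esub> x) = (QB #>\<^bsub>QF\<^esub> q) #>\<^bsub>QF\<^esub> x"
    using group.coset_mult_assoc[OF QF_group QB_sub qc assms(2)] by simp
  also have "QB #>\<^bsub>QF\<^esub> q = QB" using subgroup.rcos_const[OF QB_subgroup QF_group assms(1)] .
  finally show ?thesis .
qed

lemma vec_in_QF: "S \<in> seqs (carrier G) \<Longrightarrow> vec S \<in> carrier QF"
  using addcl.sub_q[OF addcl_F] by simp

lemma vec_in_QB: "S \<in> zss G (carrier G) \<Longrightarrow> vec S \<in> QB"
  using addcl.sub_q[OF addcl_M] by simp

lemma rep_coset:
  assumes fin: "finite (carrier G)" and "C \<in> carrier (QF Mod QB)"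
  shows "\<exists>S\<in>seqs (carrier G). C = QB #>\<^bsub>QF\<^esub> vec S"
proof -
  obtain x where x: "x \<in> carrier QF" "C = QB #>\<^bsub>QF\<^esub> x"
    using assms(2) unfolding FactGroup_def RCOSETS_def by auto
  obtain a b where ab: "a \<in> vec ` seqs (carrier G)" "b \<in> vec ` seqs (carrier G)" "x = (\<lambda>g. a g - b g)"
  proof -
    have "x \<in> qgrp (vec ` seqs (carrier G))" using x(1) by simp
    then show ?thesis using that unfolding qgrp_iff by blast
  qed
  obtain Sx where Sx: "Sx \<in> seqs (carrier G)" "a = vec Sx" using ab(1) by (rule imageE) simp
  obtain Y where Y: "Y \<in> seqs (carrier G)" "b = vec Y" using ab(2) by (rule imageE) simp
  define k where "k = order G - 1"
  have Npos: "order G > 0" using fin unfolding order_def by (simp add: card_gt_0_iff) blast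
  then have Nk: "order G = Suc k" unfolding k_def by simp
  define R where "R = repeat_mset k Y"
  have R: "R \<in> seqs (carrier G)" using Y(1) unfolding R_def seqs_def by (auto dest!: in_repeat)
  have "\<one> \<in> prods G (repeat_mset (order G) Y)" by (rule one_prods_repeat[OF Y(1)])
  then have "Y + R \<in> zss G (carrier G)" using Y(1) R unfolding Nk R_def by (simp add: zss_def)
  then have q: "vec (Y + R) \<in> QB" by (rule vec_in_QB)
  have "vec (Y + R) \<otimes>\<^bsub>QF\<^esub> x = vec (Sx + R)"
    using ab(3) Sx(2) Y(2) by (simp add: vec_add fun_eq_iff)
  then have "QB #>\<^bsub>QF\<^esub> vec (Sx + R) = QB #>\<^bsub>QF\<^esub> x"
    using coset_absorb[OF q x(1)] by simp
  then show ?thesis using x(2) Sx(1) R by (intro bexI[of _ "Sx + R"]) simp_all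
qed

lemma coset_WD:
  assumes S: "S \<in> seqs (carrier G)" and T: "T \<in> seqs (carrier G)"
    and g: "g \<in> prods G S" and h: "h \<in> prods G T"
    and e: "QB #>\<^bsub>QF\<^esub> vec S = QB #>\<^bsub>QF\<^esub> vec T"
  shows "DG #> g = DG #> h"
proof -
  have "vec S \<in> QB #>\<^bsub>QF\<^esub> vec S" using group.rcos_self[OF QF_group vec_in_QF[OF S] QB_subgroup] .
  then have "vec S \<in> QB #>\<^bsub>QF\<^esub> vec T" using e by simp
  then obtain q where q: "q \<in> QB" "vec S = q \<otimes>\<^bsub>QF\<^esub> vec T" unfolding r_coset_def by blast
  obtain a b where ab: "a \<in> vec ` zss G (carrier G)" "b \<in> vec ` zss G (carrier G)" "q = (\<lambda>g. a g - b g)"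
    using q(1) unfolding qgrp_iff by auto
  obtain A where A: "A \<in> zss G (carrier G)" "a = vec A" using ab(1) by (rule imageE) simp
  obtain B where B: "B \<in> zss G (carrier G)" "b = vec B" using ab(2) by (rule imageE) simp
  have "(\<lambda>x. vec S x + vec B x) = (\<lambda>x. vec A x + vec T x)"
  proof
    fix x show "vec S x + vec B x = vec A x + vec T x"
      using fun_cong[OF q(2), of x] ab(3) A(2) B(2) by simp
  qed
  then have SB: "S + B = A + T" by (rule vec_sum_eq)
  have Bs: "B \<in> seqs (carrier G)" "\<one> \<in> prods G B" using B(1) by (auto simp: zss_def)
  have As: "A \<in> seqs (carrier G)" "\<one> \<in> prods G A" using A(1) by (auto simp: zss_def)
  have gc: "g \<in> carrier G" using prods_closed[OF S g] .
  have hc: "h \<in> carrier G" using prods_closed[OF T h] .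
  have "g \<otimes> \<one> \<in> prods G (S + B)" using prods_add[OF S Bs(1) g Bs(2)] .
  then have g2: "g \<in> prods G (S + B)" using gc by simp
  have "\<one> \<otimes> h \<in> prods G (A + T)" using prods_add[OF As(1) T As(2) h] .
  then have h2: "h \<in> prods G (S + B)" using hc SB by simp
  show ?thesis using rho_prods[OF _ g2 h2] S Bs(1) by simp
qed

lemma coset_INJ:
  assumes fin: "finite (carrier G)"
    and S: "S \<in> seqs (carrier G)" and T: "T \<in> seqs (carrier G)"
    and g: "g \<in> prods G S" and h: "h \<in> prods G T"
    and e: "DG #> g = DG #> h"
  shows "QB #>\<^bsub>QF\<^esub> vec S = QB #>\<^bsub>QF\<^esub> vec T"
proof -
  define k where "k = order G - 1"
  have Npos: "order G > 0" using fin unfolding order_def by (simp add: card_gt_0_iff) blast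
  then have Nk: "order G = Suc k" unfolding k_def by simp
  define V where "V = repeat_mset k T"
  have V: "V \<in> seqs (carrier G)" using T unfolding V_def seqs_def by (auto dest!: in_repeat)
  have "\<one> \<in> prods G (repeat_mset (order G) T)" by (rule one_prods_repeat[OF T])
  then have one: "\<one> \<in> prods G (T + V)" unfolding Nk V_def by simp
  obtain v where v: "v \<in> prods G V" using prods_ne by blast
  have gc: "g \<in> carrier G" using prods_closed[OF S g] .
  have hc: "h \<in> carrier G" using prods_closed[OF T h] .
  have vc: "v \<in> carrier G" using prods_closed[OF V v] .
  have TV: "T + V \<in> seqs (carrier G)" using T V by simp
  have SV: "S + V \<in> seqs (carrier G)" using S V by simp
  have hv: "h \<otimes> v \<in> prods G (T + V)" using prods_add[OF T V h v] .
  have gv: "g \<otimes> v \<in> prods G (S + V)" using prods_add[OF S V g v] .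
  have "DG #> (h \<otimes> v) = DG #> \<one>" using rho_prods[OF TV hv one] .
  then have hvD: "h \<otimes> v \<in> DG" using rho_one rho_one_iff[of "h \<otimes> v"] hc vc by simp
  have "DG #> (g \<otimes> v) = DG #> (h \<otimes> v)" using rho_mult_right[OF gc hc vc e] .
  then have gvD: "g \<otimes> v \<in> DG" using rho_one_iff[of "g \<otimes> v"] rho_one_iff[of "h \<otimes> v"] hvD gc hc vc by simp
  obtain C where C: "C \<in> zss G (carrier G)" "DG \<subseteq> prods G C" using universal_C[OF fin] by blast
  have z1: "S + V + C \<in> zss G (carrier G)" using complete_D[OF C SV gv gvD] .
  have z2: "T + V + C \<in> zss G (carrier G)" using complete_D[OF C TV hv hvD] .
  define q where "q = (\<lambda>x. vec (S + V + C) x - vec (T + V + C) x)"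
  have qQ: "q \<in> QB" unfolding q_def qgrp_iff using vec_in_QB z1 z2 addcl.sub_q[OF addcl_M]
    by (intro exI[of _ "vec (S + V + C)"] exI[of _ "vec (T + V + C)"]) (auto)
  have "q \<otimes>\<^bsub>QF\<^esub> vec T = vec S" unfolding q_def by (simp add: vec_add fun_eq_iff)
  then show ?thesis using coset_absorb[OF qQ vec_in_QF[OF T]] by simp
qed


lemma Phi_eq:
  assumes S: "S \<in> seqs (carrier G)" and g: "g \<in> prods G S"
  shows "Phi G (QB #>\<^bsub>QF\<^esub> vec S) = DG #> g"
proof -
  define P where "P = (\<lambda>g'. \<exists>S'\<in>seqs (carrier G). QB #>\<^bsub>QF\<^esub> vec S = QB #>\<^bsub>QF\<^esub> vec S' \<and> g' \<in> prods G S')"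
  have "P g" unfolding P_def using S g by blast
  then have "P (SOME g. P g)" by (rule someI)
  then obtain S' where S': "S' \<in> seqs (carrier G)" "QB #>\<^bsub>QF\<^esub> vec S = QB #>\<^bsub>QF\<^esub> vec S'"
    "(SOME g. P g) \<in> prods G S'" unfolding P_def by blast
  have "DG #> g = DG #> (SOME g. P g)" using coset_WD[OF S S'(1) g S'(3) S'(2)] .
  then show ?thesis unfolding Phi_def P_def by simp
qed

lemma Phi_iso:
  assumes fin: "finite (carrier G)"
  shows "Phi G \<in> iso (QF Mod QB) (G Mod DG)"
proof -
  interpret N: normal QB QF by (rule QB_normal)
  interpret D: normal DG G by (rule DG_normal)
  have carr: "Phi G C \<in> carrier (G Mod DG)" if Cc: "C \<in> carrier (QF Mod QB)" for C
  proof -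
    obtain S where S: "S \<in> seqs (carrier G)" "C = QB #>\<^bsub>QF\<^esub> vec S" using rep_coset[OF fin Cc] by blast
    obtain g where g: "g \<in> prods G S" using prods_ne by blast
    have "g \<in> carrier G" using prods_closed[OF S(1) g] .
    then show ?thesis using Phi_eq[OF S(1) g] S(2) unfolding FactGroup_def RCOSETS_def by auto
  qed
  have hom: "Phi G \<in> hom (QF Mod QB) (G Mod DG)"
    unfolding hom_def
  proof (intro CollectI conjI ballI)
    show "Phi G \<in> carrier (QF Mod QB) \<rightarrow> carrier (G Mod DG)" using carr by blast
    fix C1 C2 assume c1: "C1 \<in> carrier (QF Mod QB)" and c2: "C2 \<in> carrier (QF Mod QB)"
    obtain S where S: "S \<in> seqs (carrier G)" "C1 = QB #>\<^bsub>QF\<^esub> vec S" using rep_coset[OF fin c1] by blast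
    obtain T where T: "T \<in> seqs (carrier G)" "C2 = QB #>\<^bsub>QF\<^esub> vec T" using rep_coset[OF fin c2] by blast
    obtain g where g: "g \<in> prods G S" using prods_ne by blast
    obtain h where h: "h \<in> prods G T" using prods_ne by blast
    have gc: "g \<in> carrier G" using prods_closed[OF S(1) g] .
    have hc: "h \<in> carrier G" using prods_closed[OF T(1) h] .
    have "C1 \<otimes>\<^bsub>QF Mod QB\<^esub> C2 = (QB #>\<^bsub>QF\<^esub> vec S) <#>\<^bsub>QF\<^esub> (QB #>\<^bsub>QF\<^esub> vec T)"
      using S(2) T(2) by (simp add: FactGroup_def)
    also have "\<dots> = QB #>\<^bsub>QF\<^esub> (vec S \<otimes>\<^bsub>QF\<^esub> vec T)"
      using N.rcos_sum[OF vec_in_QF[OF S(1)] vec_in_QF[OF T(1)]] .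
    also have "vec S \<otimes>\<^bsub>QF\<^esub> vec T = vec (S + T)" by (simp add: vec_add)
    finally have m: "C1 \<otimes>\<^bsub>QF Mod QB\<^esub> C2 = QB #>\<^bsub>QF\<^esub> vec (S + T)" .
    have ST: "S + T \<in> seqs (carrier G)" using S(1) T(1) by simp
    have "Phi G (C1 \<otimes>\<^bsub>QF Mod QB\<^esub> C2) = DG #> (g \<otimes> h)"
      unfolding m using Phi_eq[OF ST prods_add[OF S(1) T(1) g h]] .
    also have "\<dots> = (DG #> g) <#> (DG #> h)" using D.rcos_sum[OF gc hc] by simp
    also have "\<dots> = Phi G C1 \<otimes>\<^bsub>G Mod DG\<^esub> Phi G C2"
      using Phi_eq[OF S(1) g] Phi_eq[OF T(1) h] S(2) T(2) by (simp add: FactGroup_def)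
    finally show "Phi G (C1 \<otimes>\<^bsub>QF Mod QB\<^esub> C2) = Phi G C1 \<otimes>\<^bsub>G Mod DG\<^esub> Phi G C2" .
  qed
  have inj: "inj_on (Phi G) (carrier (QF Mod QB))"
  proof (rule inj_onI)
    fix C1 C2 assume c1: "C1 \<in> carrier (QF Mod QB)" and c2: "C2 \<in> carrier (QF Mod QB)"
      and e: "Phi G C1 = Phi G C2"
    obtain S where S: "S \<in> seqs (carrier G)" "C1 = QB #>\<^bsub>QF\<^esub> vec S" using rep_coset[OF fin c1] by blast
    obtain T where T: "T \<in> seqs (carrier G)" "C2 = QB #>\<^bsub>QF\<^esub> vec T" using rep_coset[OF fin c2] by blast
    obtain g where g: "g \<in> prods G S" using prods_ne by blast
    obtain h where h: "h \<in> prods G T" using prods_ne by blast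
    have "DG #> g = DG #> h" using e Phi_eq[OF S(1) g] Phi_eq[OF T(1) h] S(2) T(2) by simp
    then show "C1 = C2" using coset_INJ[OF fin S(1) T(1) g h] S(2) T(2) by simp
  qed
  have surj: "Phi G ` carrier (QF Mod QB) = carrier (G Mod DG)"
  proof
    show "Phi G ` carrier (QF Mod QB) \<subseteq> carrier (G Mod DG)" using carr by blast
    show "carrier (G Mod DG) \<subseteq> Phi G ` carrier (QF Mod QB)"
    proof
      fix R assume "R \<in> carrier (G Mod DG)"
      then obtain g where g: "g \<in> carrier G" "R = DG #> g" unfolding FactGroup_def RCOSETS_def by auto
      have S: "{#g#} \<in> seqs (carrier G)" using g(1) by (simp add: seqs_def)
      have gp: "g \<in> prods G {#g#}" using prods_single[OF g(1)] by simp
      have "QB #>\<^bsub>QF\<^esub> vec {#g#} \<in> carrier (QF Mod QB)"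
        using vec_in_QF[OF S] unfolding FactGroup_def RCOSETS_def by auto
      moreover have "R = Phi G (QB #>\<^bsub>QF\<^esub> vec {#g#})" using Phi_eq[OF S gp] g(2) by simp
      ultimately show "R \<in> Phi G ` carrier (QF Mod QB)" by (rule rev_image_eqI)
    qed
  qed
  show ?thesis unfolding iso_def using hom inj surj by (simp add: bij_betw_def)
qed


lemma class_E:
  assumes fin: "finite (carrier G)"
    and y: "y \<in> seqs (carrier G)" and y': "y' \<in> seqs (carrier G)"
    and e: "H_equiv (zss G (carrier G)) (msmon (seqs (carrier G))) y y'"
    and p: "p \<in> prods G y" and p': "p' \<in> prods G y'"
  shows "DG #> p = DG #> p'"
proof -
  define k where "k = order G - 1"
  have Npos: "order G > 0" using fin unfolding order_def by (simp add: card_gt_0_iff) blast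
  then have Nk: "order G = Suc k" unfolding k_def by simp
  define V where "V = repeat_mset k y"
  have V: "V \<in> seqs (carrier G)" using y unfolding V_def seqs_def by (auto dest!: in_repeat)
  have "\<one> \<in> prods G (repeat_mset (order G) y)" by (rule one_prods_repeat[OF y])
  then have one: "\<one> \<in> prods G (y + V)" unfolding Nk V_def by simp
  then have "V \<in> {x \<in> carrier (msmon (seqs (carrier G))). y \<otimes>\<^bsub>msmon (seqs (carrier G))\<^esub> x \<in> zss G (carrier G)}"
    using y V by (simp add: zss_def)
  moreover have eq: "{x \<in> carrier (msmon (seqs (carrier G))). y \<otimes>\<^bsub>msmon (seqs (carrier G))\<^esub> x \<in> zss G (carrier G)} =
     {x \<in> carrier (msmon (seqs (carrier G))). y' \<otimes>\<^bsub>msmon (seqs (carrier G))\<^esub> x \<in> zss G (carrier G)}"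
    using e unfolding H_equiv_def .
  ultimately have "V \<in> {x \<in> carrier (msmon (seqs (carrier G))). y' \<otimes>\<^bsub>msmon (seqs (carrier G))\<^esub> x \<in> zss G (carrier G)}"
    by (simp only: eq)
  then have one': "\<one> \<in> prods G (y' + V)" by (simp add: zss_def)
  obtain v where v: "v \<in> prods G V" using prods_ne by blast
  have pc: "p \<in> carrier G" using prods_closed[OF y p] .
  have pc': "p' \<in> carrier G" using prods_closed[OF y' p'] .
  have vc: "v \<in> carrier G" using prods_closed[OF V v] .
  have yV: "y + V \<in> seqs (carrier G)" "y' + V \<in> seqs (carrier G)" using y y' V by simp_all
  have "DG #> (p \<otimes> v) = DG #> \<one>" using rho_prods[OF yV(1) prods_add[OF y V p v] one] .
  moreover have "DG #> (p' \<otimes> v) = DG #> \<one>" using rho_prods[OF yV(2) prods_add[OF y' V p' v] one'] .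
  ultimately have "DG #> (p \<otimes> v) = DG #> (p' \<otimes> v)" by simp
  then show ?thesis using rho_cancel_right[OF pc pc' vc] by simp
qed

definition psi :: "'a multiset set \<Rightarrow> 'a set" where
  "psi A = DG #> (SOME p. p \<in> prods G (SOME a. a \<in> A))"

lemma psi_class:
  assumes fin: "finite (carrier G)" and y: "y \<in> seqs (carrier G)" and p: "p \<in> prods G y"
  shows "psi (H_class (zss G (carrier G)) (msmon (seqs (carrier G))) y) = DG #> p"
proof -
  let ?A = "H_class (zss G (carrier G)) (msmon (seqs (carrier G))) y"
  have "y \<in> ?A" using y H_equiv_refl unfolding H_class_def by simp
  then have a0: "(SOME a. a \<in> ?A) \<in> ?A" by (rule someI)
  then have a0s: "(SOME a. a \<in> ?A) \<in> seqs (carrier G)"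
    and a0e: "H_equiv (zss G (carrier G)) (msmon (seqs (carrier G))) y (SOME a. a \<in> ?A)"
    unfolding H_class_def by simp_all
  obtain q where "q \<in> prods G (SOME a. a \<in> ?A)" using prods_ne by blast
  then have q: "(SOME q. q \<in> prods G (SOME a. a \<in> ?A)) \<in> prods G (SOME a. a \<in> ?A)" by (rule someI)
  show ?thesis unfolding psi_def using class_E[OF fin y a0s a0e p q] by simp
qed

lemma psi_hom:
  assumes fin: "finite (carrier G)"
  shows "psi \<in> hom (class_semigroup (zss G (carrier G)) (msmon (seqs (carrier G)))) (G Mod DG)
    \<and> psi ` carrier (class_semigroup (zss G (carrier G)) (msmon (seqs (carrier G)))) = carrier (G Mod DG)"
proof -
  interpret D: normal DG G by (rule DG_normal)
  let ?H = "H_class (zss G (carrier G)) (msmon (seqs (carrier G)))"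
  have carr: "carrier (class_semigroup (zss G (carrier G)) (msmon (seqs (carrier G)))) = ?H ` seqs (carrier G)"
    by (simp add: class_semigroup_def)
  have pc: "psi (?H y) \<in> carrier (G Mod DG)" if y: "y \<in> seqs (carrier G)" for y
  proof -
    obtain p where p: "p \<in> prods G y" using prods_ne by blast
    have "p \<in> carrier G" using prods_closed[OF y p] .
    then show ?thesis using psi_class[OF fin y p] unfolding FactGroup_def RCOSETS_def by auto
  qed
  have some_in: "(SOME a. a \<in> ?H y) \<in> seqs (carrier G) \<and>
      ?H (SOME a. a \<in> ?H y) = ?H y" if y: "y \<in> seqs (carrier G)" for y
  proof -
    have "y \<in> ?H y" using y H_equiv_refl unfolding H_class_def by simp
    then have a0: "(SOME a. a \<in> ?H y) \<in> ?H y" by (rule someI)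
    then have "(SOME a. a \<in> ?H y) \<in> seqs (carrier G)"
      and e: "H_equiv (zss G (carrier G)) (msmon (seqs (carrier G))) y (SOME a. a \<in> ?H y)"
      unfolding H_class_def by simp_all
    then show ?thesis using H_class_eq[OF e] by simp
  qed
  have hom: "psi \<in> hom (class_semigroup (zss G (carrier G)) (msmon (seqs (carrier G)))) (G Mod DG)"
    unfolding hom_def
  proof (intro CollectI conjI ballI)
    show "psi \<in> carrier (class_semigroup (zss G (carrier G)) (msmon (seqs (carrier G)))) \<rightarrow> carrier (G Mod DG)"
      unfolding carr using pc by blast
    fix A B assume A: "A \<in> carrier (class_semigroup (zss G (carrier G)) (msmon (seqs (carrier G))))"
      and B: "B \<in> carrier (class_semigroup (zss G (carrier G)) (msmon (seqs (carrier G))))"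
    obtain y where y: "y \<in> seqs (carrier G)" "A = ?H y" using A unfolding carr by blast
    obtain z where z: "z \<in> seqs (carrier G)" "B = ?H z" using B unfolding carr by blast
    define a0 where "a0 = (SOME a. a \<in> A)"
    define b0 where "b0 = (SOME b. b \<in> B)"
    have a0: "a0 \<in> seqs (carrier G)" "?H a0 = A" using some_in[OF y(1)] y(2) unfolding a0_def by simp_all
    have b0: "b0 \<in> seqs (carrier G)" "?H b0 = B" using some_in[OF z(1)] z(2) unfolding b0_def by simp_all
    obtain pa where pa: "pa \<in> prods G a0" using prods_ne by blast
    obtain pb where pb: "pb \<in> prods G b0" using prods_ne by blast
    have pac: "pa \<in> carrier G" using prods_closed[OF a0(1) pa] .
    have pbc: "pb \<in> carrier G" using prods_closed[OF b0(1) pb] .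
    have m: "A \<otimes>\<^bsub>class_semigroup (zss G (carrier G)) (msmon (seqs (carrier G)))\<^esub> B = ?H (a0 + b0)"
      unfolding a0_def b0_def by (simp add: class_semigroup_def)
    have ab: "a0 + b0 \<in> seqs (carrier G)" using a0(1) b0(1) by simp
    have "psi (A \<otimes>\<^bsub>class_semigroup (zss G (carrier G)) (msmon (seqs (carrier G)))\<^esub> B) = DG #> (pa \<otimes> pb)"
      unfolding m using psi_class[OF fin ab prods_add[OF a0(1) b0(1) pa pb]] .
    also have "\<dots> = (DG #> pa) <#> (DG #> pb)" using D.rcos_sum[OF pac pbc] by simp
    also have "\<dots> = psi A \<otimes>\<^bsub>G Mod DG\<^esub> psi B"
      using psi_class[OF fin a0(1) pa] psi_class[OF fin b0(1) pb] a0(2) b0(2) by (simp add: FactGroup_def)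
    finally show "psi (A \<otimes>\<^bsub>class_semigroup (zss G (carrier G)) (msmon (seqs (carrier G)))\<^esub> B) =
      psi A \<otimes>\<^bsub>G Mod DG\<^esub> psi B" .
  qed
  have surj: "psi ` carrier (class_semigroup (zss G (carrier G)) (msmon (seqs (carrier G)))) = carrier (G Mod DG)"
  proof
    show "psi ` carrier (class_semigroup (zss G (carrier G)) (msmon (seqs (carrier G)))) \<subseteq> carrier (G Mod DG)"
      unfolding carr using pc by blast
    show "carrier (G Mod DG) \<subseteq> psi ` carrier (class_semigroup (zss G (carrier G)) (msmon (seqs (carrier G))))"
    proof
      fix R assume "R \<in> carrier (G Mod DG)"
      then obtain g where g: "g \<in> carrier G" "R = DG #> g" unfolding FactGroup_def RCOSETS_def by auto
      have S: "{#g#} \<in> seqs (carrier G)" using g(1) by (simp add: seqs_def)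
      have gp: "g \<in> prods G {#g#}" using prods_single[OF g(1)] by simp
      have "?H {#g#} \<in> carrier (class_semigroup (zss G (carrier G)) (msmon (seqs (carrier G))))"
        unfolding carr using S by blast
      moreover have "R = psi (?H {#g#})" using psi_class[OF fin S gp] g(2) by simp
      ultimately show "R \<in> psi ` carrier (class_semigroup (zss G (carrier G)) (msmon (seqs (carrier G))))"
        by (rule rev_image_eqI)
    qed
  qed
  show ?thesis using hom surj by simp
qed

end

theorem proposition3p5:
  fixes G :: "('a, 'b) monoid_scheme"
  assumes "group G" and "finite (carrier G)" and "card (carrier G) \<ge> 3"
  shows
    "(\<forall>G0. G0 \<subseteq> carrier G \<longrightarrow>
        cofinal (zss G G0) (msmon (seqs G0)) \<and> C_monoid (msmon (zss G G0)))
   \<and> (\<forall>g\<in>carrier G. {count S g | S. S \<in> zss G (carrier G)} = (UNIV :: nat set))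
   \<and> divisor_theory (vmon (cic (vec ` zss G (carrier G)))) (vmon (vec ` seqs (carrier G))) id
   \<and> qgrp (cic (vec ` zss G (carrier G))) = qgrp (vec ` zss G (carrier G))
   \<and> (let QF = vmon (qgrp (vec ` seqs (carrier G)));
          QB = qgrp (vec ` zss G (carrier G));
          G' = derived G (carrier G)
      in (\<forall>C\<in>carrier (QF Mod QB). \<exists>S\<in>seqs (carrier G). C = QB #>\<^bsub>QF\<^esub> vec S)
       \<and> (\<forall>S\<in>seqs (carrier G). \<forall>T\<in>seqs (carrier G). \<forall>g\<in>prods G S. \<forall>h\<in>prods G T.
            QB #>\<^bsub>QF\<^esub> vec S = QB #>\<^bsub>QF\<^esub> vec T \<longrightarrow> G' #>\<^bsub>G\<^esub> g = G' #>\<^bsub>G\<^esub> h)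
       \<and> group (QF Mod QB)
       \<and> Phi G \<in> iso (QF Mod QB) (G Mod G'))
   \<and> (\<exists>\<psi>. \<psi> \<in> hom (class_semigroup (zss G (carrier G)) (msmon (seqs (carrier G))))
                    (G Mod derived G (carrier G))
         \<and> \<psi> ` carrier (class_semigroup (zss G (carrier G)) (msmon (seqs (carrier G))))
             = carrier (G Mod derived G (carrier G)))"
proof -
  interpret group G by (rule assms(1))
  have fin: "finite (carrier G)" by (rule assms(2))
  have c3: "card (carrier G) \<ge> 3" by (rule assms(3))
  show ?thesis
    unfolding Let_def
  proof (intro conjI allI impI ballI)
    fix G0 assume "G0 \<subseteq> carrier G"
    then show "cofinal (zss G G0) (msmon (seqs G0))" "C_monoid (msmon (zss G G0))"
      using part1[OF fin] by blast+
  next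
    fix g assume "g \<in> carrier G"
    then show "{count S g | S. S \<in> zss G (carrier G)} = (UNIV :: nat set)" by (rule counts[OF c3])
  next
    show "divisor_theory (vmon (cic (vec ` zss G (carrier G)))) (vmon (vec ` seqs (carrier G))) id"
      by (rule div_theory[OF fin c3])
  next
    show "qgrp (cic (vec ` zss G (carrier G))) = qgrp (vec ` zss G (carrier G))" by (rule qgrp_cic[OF fin])
  next
    fix C assume "C \<in> carrier (vmon (qgrp (vec ` seqs (carrier G))) Mod qgrp (vec ` zss G (carrier G)))"
    then show "\<exists>S\<in>seqs (carrier G). C = qgrp (vec ` zss G (carrier G)) #>\<^bsub>vmon (qgrp (vec ` seqs (carrier G)))\<^esub> vec S"
      by (rule rep_coset[OF fin])
  next
    fix S T g h assume "S \<in> seqs (carrier G)" "T \<in> seqs (carrier G)" "g \<in> prods G S" "h \<in> prods G T"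
      "qgrp (vec ` zss G (carrier G)) #>\<^bsub>vmon (qgrp (vec ` seqs (carrier G)))\<^esub> vec S =
       qgrp (vec ` zss G (carrier G)) #>\<^bsub>vmon (qgrp (vec ` seqs (carrier G)))\<^esub> vec T"
    then show "derived G (carrier G) #>\<^bsub>G\<^esub> g = derived G (carrier G) #>\<^bsub>G\<^esub> h" by (rule coset_WD)
  next
    show "group (vmon (qgrp (vec ` seqs (carrier G))) Mod qgrp (vec ` zss G (carrier G)))" by (rule QFQB_group)
  next
    show "Phi G \<in> iso (vmon (qgrp (vec ` seqs (carrier G))) Mod qgrp (vec ` zss G (carrier G))) (G Mod derived G (carrier G))"
      by (rule Phi_iso[OF fin])
  next
    show "\<exists>\<psi>. \<psi> \<in> hom (class_semigroup (zss G (carrier G)) (msmon (seqs (carrier G)))) (G Mod derived G (carrier G))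
         \<and> \<psi> ` carrier (class_semigroup (zss G (carrier G)) (msmon (seqs (carrier G))))
             = carrier (G Mod derived G (carrier G))"
      using psi_hom[OF fin] by blast
  qed
qed

end
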